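(* Let $(B_t)_{t\ge0}$ be a standard Brownian motion and $\mathcal{F}_{s,t}=\sigma(B_u;u\le s;\ B_u;u\ge t)$ for $0\le s<t$. Let $f_+,f_-\in L^1(\mathbb{R}_+)\cap L^2(\mathbb{R}_+)$ and $C\in\mathbb{R}$. For $0\le s<t$ define $$M_{s,t}=\int_0^s f_-(u)\,dB_u+\int_t^\infty f_+(u)\,dB_u+\frac{B_t-B_s}{t-s}\left(C-\int_0^s f_-(u)\,du-\int_t^\infty f_+(u)\,du\right).$$ Then $(M_{s,t})_{0\le s<t<\infty}$ is a past-future martingale with respect to $(\mathcal{F}_{s,t})$.
   Context: A two-parameter process $(M_{s,t})_{0\le s<t<\infty}$ is a past-future martingale with respect to $(\mathcal{F}_{s,t})_{0\le s<t<\infty}$ if: (1) $\mathbb{E}[|M_{s,t}|]<\infty$ for all $s<t$; (2) $M_{s,t}$ is $\mathcal{F}_{s,t}$-measurable for all $s<t$; (3) for all $r<s<t<u$, $\mathbb{E}[M_{s,t}\mid\mathcal{F}_{r,u}]=M_{r,u}$. The stochastic integrals are Wiener integrals. *)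

theory Defs
  imports "HOL-Probability.Probability"
begin

definition standard_BM :: "'a measure \<Rightarrow> (real \<Rightarrow> 'a \<Rightarrow> real) \<Rightarrow> bool" where
  "standard_BM P B \<longleftrightarrow>
     prob_space P \<and>
     (\<forall>t. B t \<in> borel_measurable P) \<and>
     (AE \<omega> in P. B 0 \<omega> = 0) \<and>
     (AE \<omega> in P. continuous_on {0..} (\<lambda>t. B t \<omega>)) \<and>
     (\<forall>s t. 0 \<le> s \<and> s < t \<longrightarrow>
        distributed P lborel (\<lambda>\<omega>. B t \<omega> - B s \<omega>)
          (\<lambda>x. ennreal (normal_density 0 (sqrt (t - s)) x))) \<and>
     (\<forall>(n::nat) (\<tau>::nat \<Rightarrow> real). 0 \<le> \<tau> 0 \<and> (\<forall>i<n. \<tau> i < \<tau> (Suc i)) \<longrightarrow>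
        prob_space.indep_vars P (\<lambda>_. borel) (\<lambda>i \<omega>. B (\<tau> (Suc i)) \<omega> - B (\<tau> i) \<omega>) {..<n})"

definition gen_sigma :: "'a measure \<Rightarrow> (real \<Rightarrow> 'a \<Rightarrow> real) \<Rightarrow> real set \<Rightarrow> 'a measure" where
  "gen_sigma P B S = sigma (space P) {B u -` A \<inter> space P | u A. u \<in> S \<and> A \<in> sets borel}"

definition pf_filtration :: "'a measure \<Rightarrow> (real \<Rightarrow> 'a \<Rightarrow> real) \<Rightarrow> real \<Rightarrow> real \<Rightarrow> 'a measure" where
  "pf_filtration P B s t = gen_sigma P B ({0..s} \<union> {t..})"

definition past_future_martingale ::
  "'a measure \<Rightarrow> (real \<Rightarrow> real \<Rightarrow> 'a measure) \<Rightarrow> (real \<Rightarrow> real \<Rightarrow> 'a \<Rightarrow> real) \<Rightarrow> bool" where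
  "past_future_martingale P F X \<longleftrightarrow>
     (\<forall>s t. 0 \<le> s \<and> s < t \<longrightarrow> integrable P (X s t)) \<and>
     (\<forall>s t. 0 \<le> s \<and> s < t \<longrightarrow> X s t \<in> borel_measurable (F s t)) \<and>
     (\<forall>r s t u. 0 \<le> r \<and> r < s \<and> s < t \<and> t < u \<longrightarrow>
        (AE \<omega> in P. real_cond_exp P (F r u) (X s t) \<omega> = X r u \<omega>))"

definition step_fun :: "(real \<times> real \<times> real) list \<Rightarrow> real \<Rightarrow> real" where
  "step_fun cs u = (\<Sum>(c, a, b)\<leftarrow>cs. c * indicator {a..<b} u)"

definition step_integral :: "(real \<Rightarrow> 'a \<Rightarrow> real) \<Rightarrow> (real \<times> real \<times> real) list \<Rightarrow> 'a \<Rightarrow> real" where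
  "step_integral B cs \<omega> = (\<Sum>(c, a, b)\<leftarrow>cs. c * (B b \<omega> - B a \<omega>))"

text \<open>X is (a version, measurable w.r.t. sigma(B_u, u in S), of) the Wiener integral of f over S:
  the L2(P)-limit of integrals of step functions supported in S converging to f in L2(S).\<close>
definition wiener_integral ::
  "'a measure \<Rightarrow> (real \<Rightarrow> 'a \<Rightarrow> real) \<Rightarrow> (real \<Rightarrow> real) \<Rightarrow> real set \<Rightarrow> ('a \<Rightarrow> real) \<Rightarrow> bool" where
  "wiener_integral P B f S X \<longleftrightarrow>
     X \<in> borel_measurable (gen_sigma P B S) \<and>
     (\<forall>\<epsilon>>0. \<exists>cs. (\<forall>(c, a, b)\<in>set cs. a \<le> b \<and> {a..b} \<subseteq> S) \<and>
        (\<integral>\<^sup>+ u\<in>S. ennreal ((f u - step_fun cs u)\<^sup>2) \<partial>lborel) < ennreal \<epsilon> \<and>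
        (\<integral>\<^sup>+ \<omega>. ennreal ((X \<omega> - step_integral B cs \<omega>)\<^sup>2) \<partial>P) < ennreal \<epsilon>)"

definition L1L2_pos :: "(real \<Rightarrow> real) \<Rightarrow> bool" where
  "L1L2_pos f \<longleftrightarrow> set_integrable lborel {0..} f \<and> set_integrable lborel {0..} (\<lambda>u. (f u)\<^sup>2)"

end

theory Submission
  imports Defs
begin

locale BM =
  fixes P :: "'a measure" and B :: "real \<Rightarrow> 'a \<Rightarrow> real"
  assumes bm: "standard_BM P B"
begin

sublocale prob_space P
  using bm unfolding standard_BM_def by auto

lemma B_meas[measurable]: "B t \<in> borel_measurable P"
  using bm unfolding standard_BM_def by auto

lemma B0_AE: "AE \<omega> in P. B 0 \<omega> = 0"
  using bm unfolding standard_BM_def by auto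

lemma incr_dist:
  assumes "0 \<le> s" "s < t"
  shows "distributed P lborel (\<lambda>\<omega>. B t \<omega> - B s \<omega>) (\<lambda>x. ennreal (normal_density 0 (sqrt (t - s)) x))"
  using bm assms unfolding standard_BM_def by auto

lemma incr_indep:
  assumes "0 \<le> \<tau> 0" "\<And>i. i < n \<Longrightarrow> \<tau> i < \<tau> (Suc i)"
  shows "indep_vars (\<lambda>_. borel) (\<lambda>i \<omega>. B (\<tau> (Suc i)) \<omega> - B (\<tau> i) \<omega>) {..<n}"
  using bm assms unfolding standard_BM_def by auto

lemma indep_vars_pair:
  assumes "indep_vars (\<lambda>_. borel) X I" "i \<in> I" "j \<in> I" "i \<noteq> j"
  shows "indep_var borel (X i) borel (X j)"
proof -
  have "indep_var borel ((\<lambda>f. f i) \<circ> (\<lambda>\<omega>. restrict (\<lambda>k. X k \<omega>) {i}))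
                  borel ((\<lambda>f. f j) \<circ> (\<lambda>\<omega>. restrict (\<lambda>k. X k \<omega>) {j}))"
    using assms by (intro indep_var_compose[OF indep_var_restrict[OF assms(1)]]) auto
  moreover have "((\<lambda>f. f i) \<circ> (\<lambda>\<omega>. restrict (\<lambda>k. X k \<omega>) {i})) = X i" by auto
  moreover have "((\<lambda>f. f j) \<circ> (\<lambda>\<omega>. restrict (\<lambda>k. X k \<omega>) {j})) = X j" by auto
  ultimately show ?thesis by simp
qed

lemma incr_indep2:
  assumes "0 \<le> a" "a < b" "b < c"
  shows "indep_var borel (\<lambda>\<omega>. B b \<omega> - B a \<omega>) borel (\<lambda>\<omega>. B c \<omega> - B b \<omega>)"
proof -
  define \<tau> where "\<tau> = (\<lambda>i::nat. if i = 0 then a else if i = 1 then b else c)"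
  have "indep_vars (\<lambda>_. borel) (\<lambda>i \<omega>. B (\<tau> (Suc i)) \<omega> - B (\<tau> i) \<omega>) {..<2}"
    by (rule incr_indep) (use assms in \<open>auto simp: \<tau>_def less_2_cases_iff\<close>)
  from indep_vars_pair[OF this, of 0 1] show ?thesis by (simp add: \<tau>_def)
qed

lemma incr_moments:
  assumes "0 \<le> s" "s \<le> t"
  shows "integrable P (\<lambda>\<omega>. B t \<omega> - B s \<omega>)"
    and "integrable P (\<lambda>\<omega>. (B t \<omega> - B s \<omega>)\<^sup>2)"
    and "expectation (\<lambda>\<omega>. B t \<omega> - B s \<omega>) = 0"
    and "expectation (\<lambda>\<omega>. (B t \<omega> - B s \<omega>)\<^sup>2) = t - s"
proof -
  have "integrable P (\<lambda>\<omega>. B t \<omega> - B s \<omega>) \<and> integrable P (\<lambda>\<omega>. (B t \<omega> - B s \<omega>)\<^sup>2) \<and>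
        expectation (\<lambda>\<omega>. B t \<omega> - B s \<omega>) = 0 \<and> expectation (\<lambda>\<omega>. (B t \<omega> - B s \<omega>)\<^sup>2) = t - s"
  proof (cases "s = t")
    case True then show ?thesis by simp
  next
    case False
    then have st: "s < t" using assms by simp
    have pos: "0 < sqrt (t - s)" using st by simp
    note D = incr_dist[OF assms(1) st]
    have i1: "integrable P (\<lambda>\<omega>. B t \<omega> - B s \<omega>)"
      by (rule distributed_integrable_var[OF D]) (use pos in \<open>auto intro!: integrable_normal_moment_nz_1\<close>)
    have "integrable lborel (\<lambda>x. normal_density 0 (sqrt (t - s)) x * x\<^sup>2)"
      using integrable_normal_moment[of "sqrt (t - s)" 0 2] pos by simp
    then have i2: "integrable P (\<lambda>\<omega>. (B t \<omega> - B s \<omega>)\<^sup>2)"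
      using distributed_integrable[OF D, of "\<lambda>x. x\<^sup>2"] by simp
    have e1: "expectation (\<lambda>\<omega>. B t \<omega> - B s \<omega>) = 0"
      using normal_distributed_expectation[OF pos D] by simp
    have "variance (\<lambda>\<omega>. B t \<omega> - B s \<omega>) = (sqrt (t - s))\<^sup>2"
      using normal_distributed_variance[OF pos D] by simp
    then have e2: "expectation (\<lambda>\<omega>. (B t \<omega> - B s \<omega>)\<^sup>2) = t - s"
      using e1 st by simp
    show ?thesis using i1 i2 e1 e2 by simp
  qed
  then show "integrable P (\<lambda>\<omega>. B t \<omega> - B s \<omega>)"
    and "integrable P (\<lambda>\<omega>. (B t \<omega> - B s \<omega>)\<^sup>2)"
    and "expectation (\<lambda>\<omega>. B t \<omega> - B s \<omega>) = 0"
    and "expectation (\<lambda>\<omega>. (B t \<omega> - B s \<omega>)\<^sup>2) = t - s" by auto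
qed

end

lemma gauss_pointwise:
  fixes a b x z :: real
  assumes a: "0 < a" and b: "0 < b"
  shows "normal_density 0 (sqrt b) (z - x) * normal_density 0 (sqrt a) x =
         normal_density 0 (sqrt (a + b)) z * normal_density (z * a / (a + b)) (sqrt (a * b / (a + b))) x"
proof -
  have ab: "0 < a + b" using a b by simp
  have c: "1 / sqrt (2 * pi * b) * (1 / sqrt (2 * pi * a)) =
           1 / sqrt (2 * pi * (a + b)) * (1 / sqrt (2 * pi * (a * b / (a + b))))"
  proof -
    have "sqrt (2 * pi * b) * sqrt (2 * pi * a) = sqrt (2 * pi * (a + b)) * sqrt (2 * pi * (a * b / (a + b)))"
      unfolding real_sqrt_mult[symmetric] using ab by (intro arg_cong[where f=sqrt]) (simp add: field_simps)
    then show ?thesis by (simp add: field_simps)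
  qed
  have e: "- (z - x)\<^sup>2 / (2 * b) + - x\<^sup>2 / (2 * a) =
           - z\<^sup>2 / (2 * (a + b)) + - (x - z * a / (a + b))\<^sup>2 / (2 * (a * b / (a + b)))"
  proof -
    have g: "\<And>s. 0 < s \<Longrightarrow> (x - z * a / s)\<^sup>2 / (2 * (a * b / s)) = (x * s - z * a)\<^sup>2 / (2 * a * b * s)"
    proof -
      fix s :: real assume s: "0 < s"
      have "x - z * a / s = (x * s - z * a) / s" using s by (simp add: field_simps)
      then show "(x - z * a / s)\<^sup>2 / (2 * (a * b / s)) = (x * s - z * a)\<^sup>2 / (2 * a * b * s)"
        using s a b by (simp add: power_divide power2_eq_square)
    qed
    have 1: "(x - z * a / (a + b))\<^sup>2 / (2 * (a * b / (a + b))) = (x * (a + b) - z * a)\<^sup>2 / (2 * a * b * (a + b))"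
      by (rule g[OF ab])
    have 2: "- (z - x)\<^sup>2 / (2 * b) + - x\<^sup>2 / (2 * a) + z\<^sup>2 / (2 * (a + b)) + (x * (a + b) - z * a)\<^sup>2 / (2 * a * b * (a + b)) = 0"
      using a b ab by (simp add: divide_simps) (simp add: power2_eq_square algebra_simps)
    show ?thesis using 1 2 by linarith
  qed
  define A where "A = - (z - x)\<^sup>2 / (2 * b)"
  define A' where "A' = - x\<^sup>2 / (2 * a)"
  define C where "C = - z\<^sup>2 / (2 * (a + b))"
  define C' where "C' = - (x - z * a / (a + b))\<^sup>2 / (2 * (a * b / (a + b)))"
  have "normal_density 0 (sqrt b) (z - x) * normal_density 0 (sqrt a) x =
        (1 / sqrt (2 * pi * b) * (1 / sqrt (2 * pi * a))) * (exp A * exp A')"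
    using a b by (simp add: normal_density_def A_def A'_def)
  also have "\<dots> = (1 / sqrt (2 * pi * b) * (1 / sqrt (2 * pi * a))) * exp (A + A')"
    by (simp add: exp_add)
  also have "A + A' = C + C'" using e by (simp add: A_def A'_def C_def C'_def)
  also have "(1 / sqrt (2 * pi * b) * (1 / sqrt (2 * pi * a))) * exp (C + C') =
     (1 / sqrt (2 * pi * (a + b)) * (1 / sqrt (2 * pi * (a * b / (a + b))))) * (exp C * exp C')"
    by (simp only: c exp_add)
  also have "\<dots> = normal_density 0 (sqrt (a + b)) z * normal_density (z * a / (a + b)) (sqrt (a * b / (a + b))) x"
    using a b ab by (simp add: normal_density_def C_def C'_def)
  finally show ?thesis .
qed

lemma gauss_inner:
  fixes a b z :: real
  assumes a: "0 < a" and b: "0 < b"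
  shows "(\<integral>x. normal_density 0 (sqrt b) (z - x) * normal_density 0 (sqrt a) x * x \<partial>lborel) =
         a / (a + b) * z * normal_density 0 (sqrt (a + b)) z"
proof -
  have ab: "0 < a * b / (a + b)" using a b by simp
  have "(\<integral>x. normal_density 0 (sqrt b) (z - x) * normal_density 0 (sqrt a) x * x \<partial>lborel) =
        (\<integral>x. normal_density 0 (sqrt (a + b)) z * (normal_density (z * a / (a + b)) (sqrt (a * b / (a + b))) x * x) \<partial>lborel)"
    by (simp add: gauss_pointwise[OF a b] mult.assoc)
  also have "\<dots> = normal_density 0 (sqrt (a + b)) z * (\<integral>x. normal_density (z * a / (a + b)) (sqrt (a * b / (a + b))) x * x \<partial>lborel)"
    by simp
  also have "(\<integral>x. normal_density (z * a / (a + b)) (sqrt (a * b / (a + b))) x * x \<partial>lborel) = z * a / (a + b)"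
    using integral_normal_moment_nz_1[of "sqrt (a * b / (a + b))" "z * a / (a + b)"] ab by simp
  finally show ?thesis by simp
qed

lemma (in prob_space) shear_distributed:
  assumes a: "0 < a" and b: "0 < b"
    and X: "distributed M lborel X (\<lambda>x. ennreal (normal_density 0 (sqrt a) x))"
    and R: "distributed M lborel R (\<lambda>x. ennreal (normal_density 0 (sqrt b) x))"
    and ind: "indep_var borel X borel R"
  shows "distributed M (lborel \<Otimes>\<^sub>M lborel) (\<lambda>\<omega>. (X \<omega> + R \<omega>, X \<omega>))
           (\<lambda>(z, x). ennreal (normal_density 0 (sqrt b) (z - x) * normal_density 0 (sqrt a) x))"
proof -
  have ind': "indep_var lborel X lborel R"
  proof -
    have e: "case_bool lborel lborel = (\<lambda>_::bool. lborel)" "case_bool borel borel = (\<lambda>_::bool. borel)"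
      by (auto simp: fun_eq_iff split: bool.split)
    show ?thesis using ind unfolding indep_var_def indep_vars_def2 e by simp
  qed
  have J: "distributed M (lborel \<Otimes>\<^sub>M lborel) (\<lambda>\<omega>. (X \<omega>, R \<omega>))
     (\<lambda>(x, y). ennreal (normal_density 0 (sqrt a) x) * ennreal (normal_density 0 (sqrt b) y))"
    by (rule distributed_joint_indep[OF lborel.sigma_finite_measure_axioms lborel.sigma_finite_measure_axioms X R ind'])
  have Xm[measurable]: "X \<in> borel_measurable M" and Rm[measurable]: "R \<in> borel_measurable M"
    using distributed_measurable[OF X] distributed_measurable[OF R] by auto
  define f where "f = (\<lambda>(x, y). ennreal (normal_density 0 (sqrt a) x) * ennreal (normal_density 0 (sqrt b) y))"
  define g where "g = (\<lambda>(z, x). ennreal (normal_density 0 (sqrt b) (z - x) * normal_density 0 (sqrt a) x))"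
  define T where "T = (\<lambda>(x::real, y::real). (x + y, x))"
  have Tm[measurable]: "T \<in> measurable (lborel \<Otimes>\<^sub>M lborel) (lborel \<Otimes>\<^sub>M lborel)"
    unfolding T_def by measurable
  have fm[measurable]: "f \<in> borel_measurable (lborel \<Otimes>\<^sub>M lborel)" unfolding f_def by measurable
  have gm[measurable]: "g \<in> borel_measurable (lborel \<Otimes>\<^sub>M lborel)" unfolding g_def by measurable
  have "distr M (lborel \<Otimes>\<^sub>M lborel) (\<lambda>\<omega>. (X \<omega> + R \<omega>, X \<omega>)) =
        distr (distr M (lborel \<Otimes>\<^sub>M lborel) (\<lambda>\<omega>. (X \<omega>, R \<omega>))) (lborel \<Otimes>\<^sub>M lborel) T"
    by (subst distr_distr) (auto simp: T_def comp_def)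
  also have "distr M (lborel \<Otimes>\<^sub>M lborel) (\<lambda>\<omega>. (X \<omega>, R \<omega>)) = density (lborel \<Otimes>\<^sub>M lborel) f"
    using distributed_distr_eq_density[OF J] by (simp add: f_def)
  also have "distr (density (lborel \<Otimes>\<^sub>M lborel) f) (lborel \<Otimes>\<^sub>M lborel) T = density (lborel \<Otimes>\<^sub>M lborel) g"
  proof (rule measure_eqI)
    show "sets (distr (density (lborel \<Otimes>\<^sub>M lborel) f) (lborel \<Otimes>\<^sub>M lborel) T) = sets (density (lborel \<Otimes>\<^sub>M lborel) g)"
      by simp
    fix A assume "A \<in> sets (distr (density (lborel \<Otimes>\<^sub>M lborel) f) (lborel \<Otimes>\<^sub>M lborel) T)"
    then have A[measurable]: "A \<in> sets (lborel \<Otimes>\<^sub>M lborel)" by simp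
    have "emeasure (distr (density (lborel \<Otimes>\<^sub>M lborel) f) (lborel \<Otimes>\<^sub>M lborel) T) A =
          emeasure (density (lborel \<Otimes>\<^sub>M lborel) f) (T -` A \<inter> space (lborel \<Otimes>\<^sub>M lborel))"
      using A by (subst emeasure_distr) auto
    also have "\<dots> = (\<integral>\<^sup>+p. f p * indicator (T -` A \<inter> space (lborel \<Otimes>\<^sub>M lborel)) p \<partial>(lborel \<Otimes>\<^sub>M lborel))"
      by (rule emeasure_density[OF fm measurable_sets[OF Tm A]])
    also have "\<dots> = (\<integral>\<^sup>+p. f p * indicator A (T p) \<partial>(lborel \<Otimes>\<^sub>M lborel))"
      by (intro nn_integral_cong) (auto simp: indicator_def space_pair_measure)
    also have "\<dots> = (\<integral>\<^sup>+x. \<integral>\<^sup>+y. f (x, y) * indicator A (T (x, y)) \<partial>lborel \<partial>lborel)"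
      by (rule lborel.nn_integral_fst[symmetric]) measurable
    also have "\<dots> = (\<integral>\<^sup>+x. \<integral>\<^sup>+z. g (z, x) * indicator A (z, x) \<partial>lborel \<partial>lborel)"
    proof (rule nn_integral_cong)
      fix x :: real
      have "(\<integral>\<^sup>+z. g (z, x) * indicator A (z, x) \<partial>lborel) = (\<integral>\<^sup>+y. g (x + 1 * y, x) * indicator A (x + 1 * y, x) \<partial>lborel)"
        using nn_integral_real_affine[of "\<lambda>z. g (z, x) * indicator A (z, x)" 1 x] by simp
      also have "\<dots> = (\<integral>\<^sup>+y. f (x, y) * indicator A (T (x, y)) \<partial>lborel)"
        by (intro nn_integral_cong) (simp add: f_def g_def T_def ennreal_mult' mult.commute)
      finally show "(\<integral>\<^sup>+y. f (x, y) * indicator A (T (x, y)) \<partial>lborel) = (\<integral>\<^sup>+z. g (z, x) * indicator A (z, x) \<partial>lborel)" by simp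
    qed
    also have "\<dots> = (\<integral>\<^sup>+p. g p * indicator A p \<partial>(lborel \<Otimes>\<^sub>M lborel))"
      by (rule lborel_pair.nn_integral_snd) measurable
    also have "\<dots> = emeasure (density (lborel \<Otimes>\<^sub>M lborel) g) A"
      by (rule emeasure_density[OF gm A, symmetric])
    finally show "emeasure (distr (density (lborel \<Otimes>\<^sub>M lborel) f) (lborel \<Otimes>\<^sub>M lborel) T) A = emeasure (density (lborel \<Otimes>\<^sub>M lborel) g) A" .
  qed
  finally show ?thesis unfolding distributed_def g_def by auto
qed

lemma (in prob_space) gauss_cond:
  assumes a: "0 < a" and b: "0 < b"
    and X: "distributed M lborel X (\<lambda>x. ennreal (normal_density 0 (sqrt a) x))"
    and R: "distributed M lborel R (\<lambda>x. ennreal (normal_density 0 (sqrt b) x))"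
    and ind: "indep_var borel X borel R"
    and E[measurable]: "E \<in> sets borel"
  shows "expectation (\<lambda>\<omega>. X \<omega> * indicator E (X \<omega> + R \<omega>)) =
         a / (a + b) * expectation (\<lambda>\<omega>. (X \<omega> + R \<omega>) * indicator E (X \<omega> + R \<omega>))"
proof -
  have Xm[measurable]: "X \<in> borel_measurable M" and Rm[measurable]: "R \<in> borel_measurable M"
    using distributed_measurable[OF X] distributed_measurable[OF R] by auto
  define gd where "gd = (\<lambda>p::real\<times>real. normal_density 0 (sqrt b) (fst p - snd p) * normal_density 0 (sqrt a) (snd p))"
  have gdm[measurable]: "gd \<in> borel_measurable (lborel \<Otimes>\<^sub>M lborel)" unfolding gd_def by measurable
  have JD: "distributed M (lborel \<Otimes>\<^sub>M lborel) (\<lambda>\<omega>. (X \<omega> + R \<omega>, X \<omega>)) (\<lambda>p. ennreal (gd p))"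
  proof -
    have "(\<lambda>p. ennreal (gd p)) = (\<lambda>(z, x). ennreal (normal_density 0 (sqrt b) (z - x) * normal_density 0 (sqrt a) x))"
      by (auto simp: gd_def fun_eq_iff)
    then show ?thesis using shear_distributed[OF a b X R ind] by simp
  qed
  define h where "h = (\<lambda>p::real\<times>real. snd p * indicator E (fst p))"
  have hm[measurable]: "h \<in> borel_measurable (lborel \<Otimes>\<^sub>M lborel)" unfolding h_def by measurable
  have Xi: "integrable M X"
    by (rule distributed_integrable_var[OF X]) (use a in \<open>auto intro!: integrable_normal_moment_nz_1\<close>)
  have XEi: "integrable M (\<lambda>\<omega>. X \<omega> * indicator E (X \<omega> + R \<omega>))"
    by (rule Bochner_Integration.integrable_bound[OF Xi]) (auto simp: indicator_def)
  have int2: "integrable (lborel \<Otimes>\<^sub>M lborel) (\<lambda>p. gd p * h p)"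
    using distributed_integrable[OF JD hm] XEi by (simp add: h_def gd_def)
  have "expectation (\<lambda>\<omega>. X \<omega> * indicator E (X \<omega> + R \<omega>)) = (\<integral>p. gd p * h p \<partial>(lborel \<Otimes>\<^sub>M lborel))"
    using distributed_integral[OF JD hm] by (simp add: h_def gd_def)
  also have "\<dots> = (\<integral>z. \<integral>x. gd (z, x) * h (z, x) \<partial>lborel \<partial>lborel)"
    by (rule lborel_pair.integral_fst'[OF int2, symmetric])
  also have "\<dots> = (\<integral>z. a / (a + b) * (normal_density 0 (sqrt (a + b)) z * (z * indicator E z)) \<partial>lborel)"
  proof (rule Bochner_Integration.integral_cong[OF refl])
    fix z :: real
    have "(\<integral>x. gd (z, x) * h (z, x) \<partial>lborel) =
          (\<integral>x. indicator E z * (normal_density 0 (sqrt b) (z - x) * normal_density 0 (sqrt a) x * x) \<partial>lborel)"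
      by (intro Bochner_Integration.integral_cong) (auto simp: gd_def h_def)
    also have "\<dots> = indicator E z * (\<integral>x. normal_density 0 (sqrt b) (z - x) * normal_density 0 (sqrt a) x * x \<partial>lborel)"
      by simp
    also have "\<dots> = a / (a + b) * (normal_density 0 (sqrt (a + b)) z * (z * indicator E z))"
      unfolding gauss_inner[OF a b] by simp
    finally show "(\<integral>x. gd (z, x) * h (z, x) \<partial>lborel) = a / (a + b) * (normal_density 0 (sqrt (a + b)) z * (z * indicator E z))" .
  qed
  also have "\<dots> = a / (a + b) * (\<integral>z. normal_density 0 (sqrt (a + b)) z * (z * indicator E z) \<partial>lborel)"
    by simp
  also have "(\<integral>z. normal_density 0 (sqrt (a + b)) z * (z * indicator E z) \<partial>lborel) =
             expectation (\<lambda>\<omega>. (X \<omega> + R \<omega>) * indicator E (X \<omega> + R \<omega>))"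
  proof -
    have S: "distributed M lborel (\<lambda>\<omega>. X \<omega> + R \<omega>) (\<lambda>x. ennreal (normal_density (0 + 0) (sqrt ((sqrt a)\<^sup>2 + (sqrt b)\<^sup>2)) x))"
      by (rule add_indep_normal[OF ind]) (use a b X R in auto)
    then have S': "distributed M lborel (\<lambda>\<omega>. X \<omega> + R \<omega>) (\<lambda>x. ennreal (normal_density 0 (sqrt (a + b)) x))"
      using a b by simp
    show ?thesis using distributed_integral[OF S', of "\<lambda>z. z * indicator E z"] by simp
  qed
  finally show ?thesis .
qed

lemma enum_finite_real:
  fixes T :: "real set"
  assumes "finite T" "T \<noteq> {}"
  obtains n :: nat and \<tau> :: "nat \<Rightarrow> real" where "\<And>i j. i < j \<Longrightarrow> j \<le> n \<Longrightarrow> \<tau> i < \<tau> j" "\<tau> ` {..n} = T"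
proof -
  define xs where "xs = sorted_list_of_set T"
  have sw: "sorted_wrt (<) xs" unfolding xs_def by (rule strict_sorted_list_of_set)
  have sx: "set xs = T" unfolding xs_def using assms by simp
  have len: "length xs > 0" using sx assms by (cases xs) auto
  define n where "n = length xs - 1"
  have nn: "{..n} = {..<length xs}"
  proof -
    have "length xs = Suc n" using len n_def by simp
    then show ?thesis by (simp add: lessThan_Suc_atMost)
  qed
  have 1: "\<And>i j. i < j \<Longrightarrow> j \<le> n \<Longrightarrow> xs ! i < xs ! j"
    using sorted_wrt_nth_less[OF sw] len unfolding n_def by fastforce
  have 2: "(!) xs ` {..n} = T" unfolding nn sx[symmetric] by (simp add: set_conv_nth image_def) blast
  show ?thesis by (rule that[OF 1 2])
qed

context BM
begin

definition VV :: "real \<Rightarrow> real \<Rightarrow> real \<Rightarrow> 'a \<Rightarrow> real" where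
  "VV r u w \<omega> = (if w \<le> r then B w \<omega> - B 0 \<omega> else B w \<omega> - B u \<omega>)"

definition cyl :: "real \<Rightarrow> real \<Rightarrow> real set \<Rightarrow> (real \<Rightarrow> real set) \<Rightarrow> 'a set" where
  "cyl r u W A = {\<omega> \<in> space P. \<forall>w\<in>W. VV r u w \<omega> \<in> A w}"

lemma VV_meas[measurable]: "VV r u w \<in> borel_measurable P"
  unfolding VV_def by measurable

lemma cyl_sets:
  assumes "finite W" "\<And>w. A w \<in> sets borel"
  shows "cyl r u W A \<in> events"
proof -
  have [measurable]: "\<And>w. A w \<in> sets borel" by (rule assms(2))
  show ?thesis unfolding cyl_def
    by (rule sets.sets_Collect_finite_All[OF _ assms(1)]) measurable
qed

lemma cyl_indep:
  assumes r: "0 \<le> r" and rv: "r < v" and vu: "v < u"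
    and W: "finite W" "W \<subseteq> {0..r} \<union> {u..}"
    and A: "\<And>w. A w \<in> sets borel"
    and g[measurable]: "g \<in> borel_measurable (borel \<Otimes>\<^sub>M borel)"
    and gi: "integrable P (\<lambda>\<omega>. g (B v \<omega> - B r \<omega>, B u \<omega> - B v \<omega>))"
  shows "expectation (\<lambda>\<omega>. indicator (cyl r u W A) \<omega> * g (B v \<omega> - B r \<omega>, B u \<omega> - B v \<omega>)) =
         prob (cyl r u W A) * expectation (\<lambda>\<omega>. g (B v \<omega> - B r \<omega>, B u \<omega> - B v \<omega>))"
proof -
  define T where "T = W \<union> {0, r, v, u}"
  have Tf: "finite T" "T \<noteq> {}" using W by (auto simp: T_def)
  have "\<exists>(n::nat) (\<tau>::nat \<Rightarrow> real). (\<forall>i j. i < j \<longrightarrow> j \<le> n \<longrightarrow> \<tau> i < \<tau> j) \<and> \<tau> ` {..n} = T"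
    by (rule enum_finite_real[OF Tf]) auto
  then obtain n and \<tau> :: "nat \<Rightarrow> real" where st': "\<forall>i j. i < j \<longrightarrow> j \<le> n \<longrightarrow> \<tau> i < \<tau> j" and im: "\<tau> ` {..n} = T"
    by blast
  have st: "\<And>i j. i < j \<Longrightarrow> j \<le> n \<Longrightarrow> \<tau> i < \<tau> j" using st' by blast
  have T0: "\<And>w. w \<in> T \<Longrightarrow> 0 \<le> w" using W r rv vu by (auto simp: T_def)
  have lt_iff: "\<And>i j. i \<le> n \<Longrightarrow> j \<le> n \<Longrightarrow> \<tau> i < \<tau> j \<longleftrightarrow> i < j"
    by (metis linorder_neqE_nat not_less_iff_gr_or_eq st)
  have le_iff: "\<And>i j. i \<le> n \<Longrightarrow> j \<le> n \<Longrightarrow> \<tau> i \<le> \<tau> j \<longleftrightarrow> i \<le> j"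
    by (metis lt_iff not_le)
  have inT: "\<And>i. i \<le> n \<Longrightarrow> \<tau> i \<in> T" using im by auto
  define ix where "ix w = (SOME i. i \<le> n \<and> \<tau> i = w)" for w
  have ix: "\<And>w. w \<in> T \<Longrightarrow> ix w \<le> n \<and> \<tau> (ix w) = w"
  proof -
    fix w assume "w \<in> T"
    then have "\<exists>i. i \<le> n \<and> \<tau> i = w" using im by auto
    then show "ix w \<le> n \<and> \<tau> (ix w) = w" unfolding ix_def by (rule someI_ex)
  qed
  have t0: "\<tau> 0 = 0"
  proof -
    have "0 \<in> T" by (simp add: T_def)
    from ix[OF this] have "\<tau> 0 \<le> 0" using le_iff[of 0 "ix 0"] by auto
    moreover have "0 \<le> \<tau> 0" using T0 inT[of 0] by auto
    ultimately show ?thesis by simp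
  qed
  define ir where "ir = ix r"
  define iv where "iv = ix v"
  define iu where "iu = ix u"
  have irp: "ir \<le> n" "\<tau> ir = r" using ix[of r] by (auto simp: T_def ir_def)
  have ivp: "iv \<le> n" "\<tau> iv = v" using ix[of v] by (auto simp: T_def iv_def)
  have iup: "iu \<le> n" "\<tau> iu = u" using ix[of u] by (auto simp: T_def iu_def)
  have iv_eq: "iv = Suc ir"
  proof -
    have "ir < iv" using lt_iff[of ir iv] irp ivp rv by simp
    moreover have "\<not> Suc ir < iv"
    proof
      assume a: "Suc ir < iv"
      then have "Suc ir \<le> n" using ivp by simp
      then have "\<tau> (Suc ir) \<in> T" "r < \<tau> (Suc ir)" "\<tau> (Suc ir) < v"
        using inT lt_iff[of ir "Suc ir"] lt_iff[of "Suc ir" iv] irp ivp a by auto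
      then show False using W rv vu r by (auto simp: T_def)
    qed
    ultimately show ?thesis by simp
  qed
  have iu_eq: "iu = Suc iv"
  proof -
    have "iv < iu" using lt_iff[of iv iu] iup ivp vu by simp
    moreover have "\<not> Suc iv < iu"
    proof
      assume a: "Suc iv < iu"
      then have "Suc iv \<le> n" using iup by simp
      then have "\<tau> (Suc iv) \<in> T" "v < \<tau> (Suc iv)" "\<tau> (Suc iv) < u"
        using inT lt_iff[of iv "Suc iv"] lt_iff[of "Suc iv" iu] iup ivp a by auto
      then show False using W rv vu r by (auto simp: T_def)
    qed
    ultimately show ?thesis by simp
  qed
  define \<Delta> where "\<Delta> k \<omega> = B (\<tau> (Suc k)) \<omega> - B (\<tau> k) \<omega>" for k \<omega>
  have ind: "indep_vars (\<lambda>_. borel) \<Delta> {..<n}"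
    unfolding \<Delta>_def[abs_def] by (rule incr_indep) (auto simp: t0 intro: st)
  define K1 where "K1 = {ir, Suc ir}"
  define K0 where "K0 = {..<n} - K1"
  have K1n: "K1 \<subseteq> {..<n}" using iup iu_eq iv_eq by (auto simp: K1_def)
  have tele: "\<And>i j \<omega>. i \<le> j \<Longrightarrow> B (\<tau> j) \<omega> - B (\<tau> i) \<omega> = (\<Sum>k = i..<j. \<Delta> k \<omega>)"
    unfolding \<Delta>_def by (rule sum_Suc_diff'[symmetric])
  define I where "I w = (if w \<le> r then {0..<ix w} else {iu..<ix w})" for w
  have IK0: "\<And>w. w \<in> W \<Longrightarrow> I w \<subseteq> K0"
  proof -
    fix w assume w: "w \<in> W"
    then have wT: "w \<in> T" by (simp add: T_def)
    show "I w \<subseteq> K0"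
    proof (cases "w \<le> r")
      case True
      then have "ix w \<le> ir" using le_iff[of "ix w" ir] ix[OF wT] irp by simp
      then show ?thesis using True irp by (auto simp: I_def K0_def K1_def)
    next
      case False
      then have "u \<le> w" using w W by auto
      then have "iu \<le> ix w" using le_iff[of iu "ix w"] ix[OF wT] iup by simp
      then show ?thesis using False ix[OF wT] iu_eq iv_eq by (auto simp: I_def K0_def K1_def)
    qed
  qed
  have VVsum: "\<And>w \<omega>. w \<in> W \<Longrightarrow> VV r u w \<omega> = (\<Sum>k\<in>I w. \<Delta> k \<omega>)"
  proof -
    fix w \<omega> assume w: "w \<in> W"
    then have wT: "w \<in> T" by (simp add: T_def)
    show "VV r u w \<omega> = (\<Sum>k\<in>I w. \<Delta> k \<omega>)"
    proof (cases "w \<le> r")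
      case True
      have "VV r u w \<omega> = B (\<tau> (ix w)) \<omega> - B (\<tau> 0) \<omega>" using True ix[OF wT] t0 by (simp add: VV_def)
      also have "\<dots> = (\<Sum>k\<in>I w. \<Delta> k \<omega>)" using True by (simp add: tele I_def)
      finally show ?thesis .
    next
      case False
      then have "u \<le> w" using w W by auto
      then have le: "iu \<le> ix w" using le_iff[of iu "ix w"] ix[OF wT] iup by simp
      have "VV r u w \<omega> = B (\<tau> (ix w)) \<omega> - B (\<tau> iu) \<omega>" using False ix[OF wT] iup by (simp add: VV_def)
      also have "\<dots> = (\<Sum>k\<in>I w. \<Delta> k \<omega>)" using False le by (simp add: tele I_def)
      finally show ?thesis .
    qed
  qed
  define Y0 where "Y0 f = (\<Prod>w\<in>W. indicator (A w) (\<Sum>k\<in>I w. f k) :: real)" for f :: "nat \<Rightarrow> real"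
  define Y1 where "Y1 f = g (f ir, f (Suc ir))" for f :: "nat \<Rightarrow> real"
  have Y0m: "Y0 \<in> borel_measurable (Pi\<^sub>M K0 (\<lambda>_. borel))"
  proof -
    have "\<And>w. w \<in> W \<Longrightarrow> (\<lambda>f. \<Sum>k\<in>I w. f k :: real) \<in> borel_measurable (Pi\<^sub>M K0 (\<lambda>_. borel))"
    proof -
      fix w assume "w \<in> W"
      then have "\<And>k. k \<in> I w \<Longrightarrow> (\<lambda>f. f k :: real) \<in> borel_measurable (Pi\<^sub>M K0 (\<lambda>_. borel))"
        using IK0 by (auto intro!: measurable_component_singleton)
      then show "(\<lambda>f. \<Sum>k\<in>I w. f k :: real) \<in> borel_measurable (Pi\<^sub>M K0 (\<lambda>_. borel))"
        by (rule borel_measurable_sum[where f="\<lambda>k f. f k"])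
    qed
    then show ?thesis unfolding Y0_def
      by (intro borel_measurable_prod) (auto intro!: measurable_compose[OF _ borel_measurable_indicator'] A)
  qed
  have Y1m: "Y1 \<in> borel_measurable (Pi\<^sub>M K1 (\<lambda>_. borel))"
  proof -
    have "(\<lambda>f. (f ir :: real, f (Suc ir))) \<in> measurable (Pi\<^sub>M K1 (\<lambda>_. borel)) (borel \<Otimes>\<^sub>M borel)"
      by (intro measurable_Pair measurable_component_singleton) (auto simp: K1_def)
    then show ?thesis unfolding Y1_def by (rule measurable_compose) (rule g)
  qed
  have iv0: "indep_var borel (Y0 \<circ> (\<lambda>\<omega>. restrict (\<lambda>k. \<Delta> k \<omega>) K0)) borel (Y1 \<circ> (\<lambda>\<omega>. restrict (\<lambda>k. \<Delta> k \<omega>) K1))"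
    by (rule indep_var_compose[OF indep_var_restrict[OF ind] Y0m Y1m]) (use K1n in \<open>auto simp: K0_def\<close>)
  have e0: "\<And>\<omega>. \<omega> \<in> space P \<Longrightarrow> (Y0 \<circ> (\<lambda>\<omega>. restrict (\<lambda>k. \<Delta> k \<omega>) K0)) \<omega> = indicator (cyl r u W A) \<omega>"
  proof -
    fix \<omega> assume \<omega>: "\<omega> \<in> space P"
    have "(Y0 \<circ> (\<lambda>\<omega>. restrict (\<lambda>k. \<Delta> k \<omega>) K0)) \<omega> = (\<Prod>w\<in>W. indicator (A w) (VV r u w \<omega>))"
    proof -
      have "\<And>w. w \<in> W \<Longrightarrow> (\<Sum>k\<in>I w. restrict (\<lambda>k. \<Delta> k \<omega>) K0 k) = VV r u w \<omega>"
      proof -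
        fix w assume w: "w \<in> W"
        have "(\<Sum>k\<in>I w. restrict (\<lambda>k. \<Delta> k \<omega>) K0 k) = (\<Sum>k\<in>I w. \<Delta> k \<omega>)"
          using IK0[OF w] by (intro sum.cong) auto
        then show "(\<Sum>k\<in>I w. restrict (\<lambda>k. \<Delta> k \<omega>) K0 k) = VV r u w \<omega>" using VVsum[OF w] by simp
      qed
      then show ?thesis unfolding Y0_def comp_def by (auto intro!: prod.cong)
    qed
    also have "\<dots> = indicator (cyl r u W A) \<omega>"
    proof (cases "\<omega> \<in> cyl r u W A")
      case True
      then have "(\<Prod>w\<in>W. indicator (A w) (VV r u w \<omega>) :: real) = (\<Prod>w\<in>W. 1)"
        by (intro prod.cong) (auto simp: cyl_def)
      then show ?thesis using True by simp
    next
      case False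
      then obtain w where "w \<in> W" "VV r u w \<omega> \<notin> A w" using \<omega> by (auto simp: cyl_def)
      then have "(\<Prod>w\<in>W. indicator (A w) (VV r u w \<omega>) :: real) = 0"
        by (intro prod_zero[OF W(1)]) (auto intro!: bexI[of _ w])
      then show ?thesis using False by simp
    qed
    finally show "(Y0 \<circ> (\<lambda>\<omega>. restrict (\<lambda>k. \<Delta> k \<omega>) K0)) \<omega> = indicator (cyl r u W A) \<omega>" .
  qed
  have e1: "\<And>\<omega>. (Y1 \<circ> (\<lambda>\<omega>. restrict (\<lambda>k. \<Delta> k \<omega>) K1)) \<omega> = g (B v \<omega> - B r \<omega>, B u \<omega> - B v \<omega>)"
    by (simp add: Y1_def K1_def \<Delta>_def irp ivp iup iv_eq[symmetric] iu_eq[symmetric])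
  have e1': "(Y1 \<circ> (\<lambda>\<omega>. restrict (\<lambda>k. \<Delta> k \<omega>) K1)) = (\<lambda>\<omega>. g (B v \<omega> - B r \<omega>, B u \<omega> - B v \<omega>))"
    by (rule ext) (rule e1)
  have ce: "cyl r u W A \<in> events" by (rule cyl_sets[OF W(1) A])
  have i0: "integrable P (Y0 \<circ> (\<lambda>\<omega>. restrict (\<lambda>k. \<Delta> k \<omega>) K0))"
  proof -
    have "integrable P (indicator (cyl r u W A) :: 'a \<Rightarrow> real)"
      by (rule integrable_real_indicator[OF ce]) (simp add: emeasure_eq_measure)
    then show ?thesis by (rule integrable_cong_AE_imp) (use indep_var_rv1[OF iv0] e0 in auto)
  qed
  have i1: "integrable P (Y1 \<circ> (\<lambda>\<omega>. restrict (\<lambda>k. \<Delta> k \<omega>) K1))"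
    using gi by (simp only: e1')
  have "expectation (\<lambda>\<omega>. indicator (cyl r u W A) \<omega> * g (B v \<omega> - B r \<omega>, B u \<omega> - B v \<omega>)) =
        expectation (\<lambda>\<omega>. (Y0 \<circ> (\<lambda>\<omega>. restrict (\<lambda>k. \<Delta> k \<omega>) K0)) \<omega> * (Y1 \<circ> (\<lambda>\<omega>. restrict (\<lambda>k. \<Delta> k \<omega>) K1)) \<omega>)"
    by (intro Bochner_Integration.integral_cong refl) (simp only: e0 e1)
  also have "\<dots> = expectation (Y0 \<circ> (\<lambda>\<omega>. restrict (\<lambda>k. \<Delta> k \<omega>) K0)) * expectation (Y1 \<circ> (\<lambda>\<omega>. restrict (\<lambda>k. \<Delta> k \<omega>) K1))"
    by (rule indep_var_lebesgue_integral[OF iv0 i0 i1])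
  also have "expectation (Y0 \<circ> (\<lambda>\<omega>. restrict (\<lambda>k. \<Delta> k \<omega>) K0)) = prob (cyl r u W A)"
  proof -
    have "expectation (Y0 \<circ> (\<lambda>\<omega>. restrict (\<lambda>k. \<Delta> k \<omega>) K0)) = expectation (indicator (cyl r u W A))"
      by (intro Bochner_Integration.integral_cong refl) (simp only: e0)
    then show ?thesis using ce by simp
  qed
  also have "expectation (Y1 \<circ> (\<lambda>\<omega>. restrict (\<lambda>k. \<Delta> k \<omega>) K1)) = expectation (\<lambda>\<omega>. g (B v \<omega> - B r \<omega>, B u \<omega> - B v \<omega>))"
    by (simp only: e1')
  finally show ?thesis .
qed

end

lemma sigma_measurableI:
  assumes "G \<subseteq> Pow \<Omega>" "\<And>A. A \<in> sets borel \<Longrightarrow> f -` A \<inter> \<Omega> \<in> sigma_sets \<Omega> G"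
  shows "(f :: 'a \<Rightarrow> real) \<in> borel_measurable (sigma \<Omega> G)"
  by (rule measurableI) (use assms in \<open>auto simp: sets_measure_of space_measure_of\<close>)

context BM
begin

abbreviation Gen :: "real set \<Rightarrow> 'a set set" where
  "Gen S \<equiv> {B w -` A \<inter> space P | w A. w \<in> S \<and> A \<in> sets borel}"

lemma Gen_Pow: "Gen S \<subseteq> Pow (space P)" by auto

lemma Gen_events: "Gen S \<subseteq> events"
  by (auto intro!: measurable_sets[OF B_meas])

lemma gen_sigma_space[simp]: "space (gen_sigma P B S) = space P"
  unfolding gen_sigma_def by (rule space_measure_of[OF Gen_Pow])

lemma gen_sigma_sets: "sets (gen_sigma P B S) = sigma_sets (space P) (Gen S)"
  unfolding gen_sigma_def by (rule sets_measure_of[OF Gen_Pow])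

lemma gen_sigma_subalg: "subalgebra P (gen_sigma P B S)"
  unfolding subalgebra_def gen_sigma_sets using Gen_events by (auto intro!: sets.sigma_sets_subset)

lemma gen_sigma_mono: "S \<subseteq> S' \<Longrightarrow> sets (gen_sigma P B S) \<subseteq> sets (gen_sigma P B S')"
  unfolding gen_sigma_sets by (rule sigma_sets_mono') blast

lemma gen_sigma_meas_mono:
  assumes "f \<in> borel_measurable (gen_sigma P B S)" "S \<subseteq> S'"
  shows "f \<in> borel_measurable (gen_sigma P B S')"
  using measurable_mono[of borel borel "gen_sigma P B S" "gen_sigma P B S'"] gen_sigma_mono[OF assms(2)] assms(1)
  by auto

lemma B_meas_gen: "w \<in> S \<Longrightarrow> B w \<in> borel_measurable (gen_sigma P B S)"
  by (rule measurableI) (auto simp: gen_sigma_sets)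

lemma from_gen: "f \<in> borel_measurable (gen_sigma P B S) \<Longrightarrow> f \<in> borel_measurable P"
  by (rule measurable_from_subalg[OF gen_sigma_subalg])

lemma gen_sigma_sfs: "sigma_finite_subalgebra P (gen_sigma P B S)"
proof -
  have "finite_measure_subalgebra P (gen_sigma P B S)"
    by unfold_locales (rule gen_sigma_subalg)
  then show ?thesis by (rule finite_measure_subalgebra_is_sigma_finite)
qed

lemma cyl_Int:
  "cyl r u W1 A1 \<inter> cyl r u W2 A2 =
   cyl r u (W1 \<union> W2) (\<lambda>w. (if w \<in> W1 then A1 w else UNIV) \<inter> (if w \<in> W2 then A2 w else UNIV))"
  by (auto simp: cyl_def)

lemma key:
  assumes r: "0 \<le> r" and rv: "r < v" and vu: "v < u"
  shows "AE \<omega> in P. real_cond_exp P (pf_filtration P B r u) (\<lambda>\<omega>. B v \<omega> - B r \<omega>) \<omega> =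
                     (v - r) / (u - r) * (B u \<omega> - B r \<omega>)"
proof -
  define G where "G = pf_filtration P B r u"
  interpret sfs: sigma_finite_subalgebra P G
    unfolding G_def pf_filtration_def by (rule gen_sigma_sfs)
  define lam where "lam = (v - r) / (u - r)"
  define Z where "Z \<omega> = (B v \<omega> - B r \<omega>) - lam * (B u \<omega> - B r \<omega>)" for \<omega>
  have Zm[measurable]: "Z \<in> borel_measurable P" unfolding Z_def by measurable
  have i1: "integrable P (\<lambda>\<omega>. B v \<omega> - B r \<omega>)" using incr_moments(1)[of r v] r rv by simp
  have i2: "integrable P (\<lambda>\<omega>. B u \<omega> - B r \<omega>)" using incr_moments(1)[of r u] r rv vu by simp
  have Zi: "integrable P Z" unfolding Z_def using i1 i2 by auto
  have EZ: "expectation Z = 0"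
    unfolding Z_def using i1 i2 incr_moments(3)[of r v] incr_moments(3)[of r u] r rv vu by simp
  define PP where "PP = {cyl r u W A \<inter> (\<lambda>\<omega>. B u \<omega> - B r \<omega>) -` E \<inter> B 0 -` E0 | W A E E0.
      finite W \<and> W \<subseteq> {0..r} \<union> {u..} \<and> (\<forall>w. A w \<in> sets borel) \<and> E \<in> sets borel \<and> E0 \<in> sets borel}"
  have PP_I: "cyl r u W A \<inter> (\<lambda>\<omega>. B u \<omega> - B r \<omega>) -` E \<inter> B 0 -` E0 \<in> PP"
    if "finite W" "W \<subseteq> {0..r} \<union> {u..}" "\<forall>w. A w \<in> sets borel" "E \<in> sets borel" "E0 \<in> sets borel" for W A E E0
    unfolding PP_def using that by blast
  have PP_ev: "PP \<subseteq> events"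
  proof
    fix X assume "X \<in> PP"
    then obtain W A E E0 where X: "X = cyl r u W A \<inter> (\<lambda>\<omega>. B u \<omega> - B r \<omega>) -` E \<inter> B 0 -` E0"
      and W: "finite W" and A: "\<forall>w. A w \<in> sets borel" and E: "E \<in> sets borel" "E0 \<in> sets borel"
      unfolding PP_def by blast
    have "X = cyl r u W A \<inter> ((\<lambda>\<omega>. B u \<omega> - B r \<omega>) -` E \<inter> space P) \<inter> (B 0 -` E0 \<inter> space P)"
      using X by (auto simp: cyl_def)
    also have "\<dots> \<in> events"
    proof -
      have c: "cyl r u W A \<in> events" using cyl_sets[OF W] A by auto
      have s1: "(\<lambda>\<omega>. B u \<omega> - B r \<omega>) -` E \<inter> space P \<in> events" by (rule measurable_sets[OF _ E(1)]) measurable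
      have s2: "B 0 -` E0 \<inter> space P \<in> events" by (rule measurable_sets[OF B_meas E(2)])
      show ?thesis by (intro sets.Int c s1 s2)
    qed
    finally show "X \<in> events" .
  qed
  have PP_Pow: "PP \<subseteq> Pow (space P)" using PP_ev sets.sets_into_space by auto
  have PP_stable: "Int_stable PP"
  proof (rule Int_stableI)
    fix X Y assume "X \<in> PP" "Y \<in> PP"
    then obtain W1 A1 E1 E01 W2 A2 E2 E02 where
      X: "X = cyl r u W1 A1 \<inter> (\<lambda>\<omega>. B u \<omega> - B r \<omega>) -` E1 \<inter> B 0 -` E01"
      and W1: "finite W1" "W1 \<subseteq> {0..r} \<union> {u..}" and A1: "\<forall>w. A1 w \<in> sets borel" and E1: "E1 \<in> sets borel" "E01 \<in> sets borel"
      and Y: "Y = cyl r u W2 A2 \<inter> (\<lambda>\<omega>. B u \<omega> - B r \<omega>) -` E2 \<inter> B 0 -` E02"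
      and W2: "finite W2" "W2 \<subseteq> {0..r} \<union> {u..}" and A2: "\<forall>w. A2 w \<in> sets borel" and E2: "E2 \<in> sets borel" "E02 \<in> sets borel"
      unfolding PP_def by blast
    have "X \<inter> Y = cyl r u (W1 \<union> W2) (\<lambda>w. (if w \<in> W1 then A1 w else UNIV) \<inter> (if w \<in> W2 then A2 w else UNIV))
        \<inter> (\<lambda>\<omega>. B u \<omega> - B r \<omega>) -` (E1 \<inter> E2) \<inter> B 0 -` (E01 \<inter> E02)"
      unfolding X Y cyl_Int[symmetric] by auto
    moreover have "\<forall>w. (if w \<in> W1 then A1 w else UNIV) \<inter> (if w \<in> W2 then A2 w else UNIV) \<in> sets borel"
      using A1 A2 by auto
    ultimately show "X \<inter> Y \<in> PP" by (simp only:) (rule PP_I, use W1 W2 E1 E2 in auto)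
  qed
  have D1: "distributed P lborel (\<lambda>\<omega>. B v \<omega> - B r \<omega>) (\<lambda>x. ennreal (normal_density 0 (sqrt (v - r)) x))"
    using incr_dist[OF r rv] .
  have D2: "distributed P lborel (\<lambda>\<omega>. B u \<omega> - B v \<omega>) (\<lambda>x. ennreal (normal_density 0 (sqrt (u - v)) x))"
    using incr_dist[of v u] r rv vu by simp
  have ind: "indep_var borel (\<lambda>\<omega>. B v \<omega> - B r \<omega>) borel (\<lambda>\<omega>. B u \<omega> - B v \<omega>)"
    by (rule incr_indep2[OF r rv vu])
  have basicZ: "(LINT \<omega>:X|P. Z \<omega>) = 0" if "X \<in> PP" for X
  proof -
    from that obtain W A E E0 where X: "X = cyl r u W A \<inter> (\<lambda>\<omega>. B u \<omega> - B r \<omega>) -` E \<inter> B 0 -` E0"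
      and W: "finite W" "W \<subseteq> {0..r} \<union> {u..}" and A: "\<forall>w. A w \<in> sets borel" and E[measurable]: "E \<in> sets borel" "E0 \<in> sets borel"
      unfolding PP_def by blast
    have Xev: "X \<in> events" using that PP_ev by auto
    have cev: "cyl r u W A \<in> events" using cyl_sets[OF W(1)] A by auto
    define C where "C = cyl r u W A \<inter> ((\<lambda>\<omega>. B u \<omega> - B r \<omega>) -` E \<inter> space P)"
    have Cev: "C \<in> events"
    proof -
      have s1: "(\<lambda>\<omega>. B u \<omega> - B r \<omega>) -` E \<inter> space P \<in> events" by (rule measurable_sets[OF _ E(1)]) measurable
      show ?thesis unfolding C_def by (intro sets.Int cev s1)
    qed
    show ?thesis
    proof (cases "0 \<in> E0")
      case True
      have "(LINT \<omega>:X|P. Z \<omega>) = (LINT \<omega>:C|P. Z \<omega>)"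
      proof (rule set_integral_cong_set)
        show "set_borel_measurable P X Z" using Xev unfolding set_borel_measurable_def by measurable
        show "set_borel_measurable P C Z" using Cev unfolding set_borel_measurable_def by measurable
        show "AE x in P. (x \<in> C) = (x \<in> X)"
          by (rule AE_mp[OF B0_AE], rule AE_I2) (use True in \<open>auto simp: X C_def cyl_def\<close>)
      qed
      also have "\<dots> = expectation (\<lambda>\<omega>. indicator (cyl r u W A) \<omega> *
           (\<lambda>(x, y). indicator E (x + y) * (x - lam * (x + y))) (B v \<omega> - B r \<omega>, B u \<omega> - B v \<omega>))"
        unfolding set_lebesgue_integral_def
        by (intro Bochner_Integration.integral_cong refl) (auto simp: C_def Z_def indicator_def)
      also have "\<dots> = prob (cyl r u W A) * expectation (\<lambda>\<omega>.
           (\<lambda>(x, y). indicator E (x + y) * (x - lam * (x + y))) (B v \<omega> - B r \<omega>, B u \<omega> - B v \<omega>))"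
      proof (rule cyl_indep[OF r rv vu W])
        show "\<And>w. A w \<in> sets borel" using A by auto
        show "(\<lambda>(x, y). indicator E (x + y) * (x - lam * (x + y))) \<in> borel_measurable (borel \<Otimes>\<^sub>M borel)"
          by measurable
        have "integrable P (\<lambda>\<omega>. (B v \<omega> - B r \<omega>) - lam * (B u \<omega> - B r \<omega>))" using i1 i2 by auto
        then show "integrable P (\<lambda>\<omega>. (\<lambda>(x, y). indicator E (x + y) * (x - lam * (x + y))) (B v \<omega> - B r \<omega>, B u \<omega> - B v \<omega>))"
          by (rule Bochner_Integration.integrable_bound) (auto simp: indicator_def)
      qed
      also have "expectation (\<lambda>\<omega>. (\<lambda>(x, y). indicator E (x + y) * (x - lam * (x + y))) (B v \<omega> - B r \<omega>, B u \<omega> - B v \<omega>)) = 0"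
      proof -
        have g: "expectation (\<lambda>\<omega>. (B v \<omega> - B r \<omega>) * indicator E ((B v \<omega> - B r \<omega>) + (B u \<omega> - B v \<omega>))) =
           (v - r) / ((v - r) + (u - v)) * expectation (\<lambda>\<omega>. ((B v \<omega> - B r \<omega>) + (B u \<omega> - B v \<omega>)) * indicator E ((B v \<omega> - B r \<omega>) + (B u \<omega> - B v \<omega>)))"
          by (rule gauss_cond[OF _ _ D1 D2 ind E(1)]) (use rv vu in auto)
        have j1: "integrable P (\<lambda>\<omega>. (B v \<omega> - B r \<omega>) * indicator E ((B v \<omega> - B r \<omega>) + (B u \<omega> - B v \<omega>)))"
          by (rule Bochner_Integration.integrable_bound[OF i1]) (auto simp: indicator_def)
        have j2: "integrable P (\<lambda>\<omega>. ((B v \<omega> - B r \<omega>) + (B u \<omega> - B v \<omega>)) * indicator E ((B v \<omega> - B r \<omega>) + (B u \<omega> - B v \<omega>)))"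
          by (rule Bochner_Integration.integrable_bound[OF i2]) (auto simp: indicator_def)
        have "expectation (\<lambda>\<omega>. (\<lambda>(x, y). indicator E (x + y) * (x - lam * (x + y))) (B v \<omega> - B r \<omega>, B u \<omega> - B v \<omega>)) =
              expectation (\<lambda>\<omega>. (B v \<omega> - B r \<omega>) * indicator E ((B v \<omega> - B r \<omega>) + (B u \<omega> - B v \<omega>)) -
                 lam * (((B v \<omega> - B r \<omega>) + (B u \<omega> - B v \<omega>)) * indicator E ((B v \<omega> - B r \<omega>) + (B u \<omega> - B v \<omega>))))"
          by (intro Bochner_Integration.integral_cong refl) (simp add: algebra_simps)
        also have "\<dots> = 0" using j1 j2 g unfolding lam_def by simp
        finally show ?thesis .
      qed
      finally show ?thesis by simp
    next
      case False
      have "(LINT \<omega>:X|P. Z \<omega>) = (LINT \<omega>:{}|P. Z \<omega>)"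
      proof (rule set_integral_cong_set)
        show "set_borel_measurable P X Z" using Xev unfolding set_borel_measurable_def by measurable
        show "set_borel_measurable P {} Z" unfolding set_borel_measurable_def by simp
        show "AE x in P. (x \<in> {}) = (x \<in> X)"
          by (rule AE_mp[OF B0_AE], rule AE_I2) (use False in \<open>auto simp: X\<close>)
      qed
      then show ?thesis by (simp add: set_lebesgue_integral_def)
    qed
  qed
  have sig: "(LINT \<omega>:X|P. Z \<omega>) = 0" if X: "X \<in> sigma_sets (space P) PP" for X
    using PP_stable PP_Pow X
  proof (induction rule: sigma_sets_induct_disjoint)
    case (basic A) then show ?case by (rule basicZ)
  next
    case empty then show ?case by (simp add: set_lebesgue_integral_def)
  next
    case (compl A)
    have Aev: "A \<in> events" using compl.hyps PP_ev sets.sigma_sets_subset by blast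
    have "(LINT \<omega>:(space P - A)|P. Z \<omega>) = expectation Z - (LINT \<omega>:A|P. Z \<omega>)"
    proof -
      have "(LINT \<omega>:(space P - A)|P. Z \<omega>) = expectation (\<lambda>\<omega>. Z \<omega> - indicator A \<omega> * Z \<omega>)"
        unfolding set_lebesgue_integral_def
        by (intro Bochner_Integration.integral_cong refl) (auto simp: indicator_def)
      also have "\<dots> = expectation Z - expectation (\<lambda>\<omega>. indicator A \<omega> * Z \<omega>)"
        using Zi integrable_mult_indicator[OF Aev Zi] by simp
      finally show ?thesis by (simp add: set_lebesgue_integral_def)
    qed
    then show ?case using compl.IH EZ by simp
  next
    case (union A)
    have Aev: "\<And>i. A i \<in> events" using union.hyps PP_ev sets.sigma_sets_subset by blast
    have "(LINT \<omega>:(\<Union>i. A i)|P. Z \<omega>) = (\<Sum>i. (LINT \<omega>:(A i)|P. Z \<omega>))"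
    proof (rule lebesgue_integral_countable_add)
      show "\<And>i. A i \<in> events" by (rule Aev)
      show "\<And>i j. i \<noteq> j \<Longrightarrow> A i \<inter> A j = {}" using union.hyps(1) unfolding disjoint_family_on_def by auto
      have "(\<Union>i. A i) \<in> events" using Aev by auto
      then show "set_integrable P (\<Union>i. A i) Z" unfolding set_integrable_def
        using integrable_mult_indicator[OF _ Zi] by simp
    qed
    then show ?case using union.IH by simp
  qed
  have Gsub: "sets G \<subseteq> sigma_sets (space P) PP"
  proof -
    let ?M = "sigma (space P) PP"
    have VVm: "VV r u w \<in> borel_measurable ?M" if w: "w \<in> {0..r} \<union> {u..}" for w
    proof (rule sigma_measurableI[OF PP_Pow])
      fix A :: "real set" assume A: "A \<in> sets borel"
      have "VV r u w -` A \<inter> space P = cyl r u {w} (\<lambda>_. A) \<inter> (\<lambda>\<omega>. B u \<omega> - B r \<omega>) -` UNIV \<inter> B 0 -` UNIV"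
        by (auto simp: cyl_def)
      also have "\<dots> \<in> PP" by (rule PP_I) (use w A in auto)
      finally show "VV r u w -` A \<inter> space P \<in> sigma_sets (space P) PP" by blast
    qed
    have Sm: "(\<lambda>\<omega>. B u \<omega> - B r \<omega>) \<in> borel_measurable ?M"
    proof (rule sigma_measurableI[OF PP_Pow])
      fix A :: "real set" assume A: "A \<in> sets borel"
      have "(\<lambda>\<omega>. B u \<omega> - B r \<omega>) -` A \<inter> space P = cyl r u {} (\<lambda>_. UNIV) \<inter> (\<lambda>\<omega>. B u \<omega> - B r \<omega>) -` A \<inter> B 0 -` UNIV"
        by (auto simp: cyl_def)
      also have "\<dots> \<in> PP" by (rule PP_I) (use A in auto)
      finally show "(\<lambda>\<omega>. B u \<omega> - B r \<omega>) -` A \<inter> space P \<in> sigma_sets (space P) PP" by blast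
    qed
    have B0m: "B 0 \<in> borel_measurable ?M"
    proof (rule sigma_measurableI[OF PP_Pow])
      fix A :: "real set" assume A: "A \<in> sets borel"
      have "B 0 -` A \<inter> space P = cyl r u {} (\<lambda>_. UNIV) \<inter> (\<lambda>\<omega>. B u \<omega> - B r \<omega>) -` UNIV \<inter> B 0 -` A"
        by (auto simp: cyl_def)
      also have "\<dots> \<in> PP" by (rule PP_I) (use A in auto)
      finally show "B 0 -` A \<inter> space P \<in> sigma_sets (space P) PP" by blast
    qed
    have Bm: "B w \<in> borel_measurable ?M" if w: "w \<in> {0..r} \<union> {u..}" for w
    proof (cases "w \<le> r")
      case True
      have "B w = (\<lambda>\<omega>. VV r u w \<omega> + B 0 \<omega>)" using True by (auto simp: VV_def)
      then show ?thesis using VVm[OF w] B0m by simp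
    next
      case False
      have rr: "r \<in> {0..r} \<union> {u..}" using r by simp
      have "B w = (\<lambda>\<omega>. VV r u w \<omega> + (B u \<omega> - B r \<omega>) + VV r u r \<omega> + B 0 \<omega>)"
        using False by (auto simp: VV_def)
      then show ?thesis using VVm[OF w] VVm[OF rr] Sm B0m by simp
    qed
    have "Gen ({0..r} \<union> {u..}) \<subseteq> sigma_sets (space P) PP"
    proof
      fix X assume "X \<in> Gen ({0..r} \<union> {u..})"
      then obtain w A where X: "X = B w -` A \<inter> space P" and w: "w \<in> {0..r} \<union> {u..}" and A: "A \<in> sets borel"
        by blast
      have "B w -` A \<inter> space ?M \<in> sets ?M" using measurable_sets[OF Bm[OF w] A] .
      then show "X \<in> sigma_sets (space P) PP" using X by (simp add: sets_measure_of[OF PP_Pow] space_measure_of[OF PP_Pow])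
    qed
    then show ?thesis unfolding G_def pf_filtration_def gen_sigma_sets by (rule sigma_sets_mono)
  qed
  have gm: "(\<lambda>\<omega>. (v - r) / (u - r) * (B u \<omega> - B r \<omega>)) \<in> borel_measurable G"
  proof -
    have "B u \<in> borel_measurable G" "B r \<in> borel_measurable G"
      unfolding G_def pf_filtration_def using r rv vu by (auto intro!: B_meas_gen)
    then show ?thesis by measurable
  qed
  show ?thesis unfolding G_def[symmetric]
  proof (rule sfs.real_cond_exp_charact)
    fix X assume X: "X \<in> sets G"
    then have Xs: "X \<in> sigma_sets (space P) PP" using Gsub by auto
    have Xev: "X \<in> events" using Xs PP_ev sets.sigma_sets_subset by blast
    have "(LINT \<omega>:X|P. Z \<omega>) = (LINT \<omega>:X|P. (B v \<omega> - B r \<omega>)) - (LINT \<omega>:X|P. ((v - r) / (u - r) * (B u \<omega> - B r \<omega>)))"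
    proof -
      have s1: "set_integrable P X (\<lambda>\<omega>. B v \<omega> - B r \<omega>)"
        unfolding set_integrable_def using integrable_mult_indicator[OF Xev i1] by simp
      have i2': "integrable P (\<lambda>\<omega>. (v - r) / (u - r) * (B u \<omega> - B r \<omega>))" using i2 by simp
      have s2: "set_integrable P X (\<lambda>\<omega>. (v - r) / (u - r) * (B u \<omega> - B r \<omega>))"
        unfolding set_integrable_def using integrable_mult_indicator[OF Xev i2'] by simp
      show ?thesis unfolding Z_def lam_def by (rule set_integral_diff(2)[OF s1 s2])
    qed
    then show "(LINT \<omega>:X|P. (B v \<omega> - B r \<omega>)) = (LINT \<omega>:X|P. ((v - r) / (u - r) * (B u \<omega> - B r \<omega>)))"
      using sig[OF Xs] by simp
  next
    show "integrable P (\<lambda>\<omega>. B v \<omega> - B r \<omega>)" by (rule i1)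
    show "integrable P (\<lambda>\<omega>. (v - r) / (u - r) * (B u \<omega> - B r \<omega>))" using i2 by simp
    show "(\<lambda>\<omega>. (v - r) / (u - r) * (B u \<omega> - B r \<omega>)) \<in> borel_measurable G" by (rule gm)
  qed
qed

end

lemma (in sigma_finite_subalgebra) cond_abs_le:
  assumes f: "integrable M f"
  shows "(\<integral>x. \<bar>real_cond_exp M F f x\<bar> \<partial>M) \<le> (\<integral>x. \<bar>f x\<bar> \<partial>M)"
proof -
  have fm[measurable]: "f \<in> borel_measurable M" using f by auto
  have fa: "integrable M (\<lambda>x. \<bar>f x\<bar>)" using f by auto
  have p1: "AE x in M. 0 \<le> real_cond_exp M F (\<lambda>x. \<bar>f x\<bar> - f x) x"
    by (rule real_cond_exp_pos) auto
  have p2: "AE x in M. 0 \<le> real_cond_exp M F (\<lambda>x. \<bar>f x\<bar> + f x) x"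
    by (rule real_cond_exp_pos) auto
  have d1: "AE x in M. real_cond_exp M F (\<lambda>x. \<bar>f x\<bar> - f x) x = real_cond_exp M F (\<lambda>x. \<bar>f x\<bar>) x - real_cond_exp M F f x"
    by (rule real_cond_exp_diff[OF fa f])
  have d2: "AE x in M. real_cond_exp M F (\<lambda>x. \<bar>f x\<bar> + f x) x = real_cond_exp M F (\<lambda>x. \<bar>f x\<bar>) x + real_cond_exp M F f x"
    by (rule real_cond_exp_add[OF fa f])
  have le: "AE x in M. \<bar>real_cond_exp M F f x\<bar> \<le> real_cond_exp M F (\<lambda>x. \<bar>f x\<bar>) x"
    using p1 p2 d1 d2 by eventually_elim auto
  have "(\<integral>x. \<bar>real_cond_exp M F f x\<bar> \<partial>M) \<le> (\<integral>x. real_cond_exp M F (\<lambda>x. \<bar>f x\<bar>) x \<partial>M)"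
    by (rule integral_mono_AE[OF integrable_abs[OF real_cond_exp_int(1)[OF f]] real_cond_exp_int(1)[OF fa] le])
  also have "\<dots> = (\<integral>x. \<bar>f x\<bar> \<partial>M)" by (rule real_cond_exp_int(2)[OF fa])
  finally show ?thesis .
qed

context BM
begin

lemma B_AE: "AE \<omega> in P. B t \<omega> = B t \<omega> - B 0 \<omega>"
  using B0_AE by eventually_elim simp

lemma B_int: "0 \<le> t \<Longrightarrow> integrable P (B t)"
  by (rule integrable_cong_AE_imp[OF incr_moments(1)[of 0 t]]) (use B_AE in \<open>auto elim: AE_mp\<close>)

lemma B_sq_int: "0 \<le> t \<Longrightarrow> integrable P (\<lambda>\<omega>. (B t \<omega>)\<^sup>2)"
  by (rule integrable_cong_AE_imp[OF incr_moments(2)[of 0 t]]) (use B_AE[of t] in \<open>auto elim!: AE_mp\<close>)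

lemma B_prod_int:
  assumes "0 \<le> x" "0 \<le> y"
  shows "integrable P (\<lambda>\<omega>. B x \<omega> * B y \<omega>)"
proof -
  have "integrable P (\<lambda>\<omega>. (B x \<omega>)\<^sup>2 + (B y \<omega>)\<^sup>2)" using B_sq_int assms by auto
  then show ?thesis
  proof (rule Bochner_Integration.integrable_bound)
    show "AE \<omega> in P. norm (B x \<omega> * B y \<omega>) \<le> norm ((B x \<omega>)\<^sup>2 + (B y \<omega>)\<^sup>2)"
    proof (rule AE_I2)
      fix \<omega>
      have "\<bar>B x \<omega> * B y \<omega>\<bar> \<le> (B x \<omega>)\<^sup>2 + (B y \<omega>)\<^sup>2"
      proof -
        have h: "\<And>a b :: real. \<bar>a * b\<bar> \<le> a\<^sup>2 + b\<^sup>2"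
        proof -
          fix a b :: real
          have "0 \<le> (\<bar>a\<bar> - \<bar>b\<bar>)\<^sup>2" by simp
          then have "2 * (\<bar>a\<bar> * \<bar>b\<bar>) \<le> \<bar>a\<bar>\<^sup>2 + \<bar>b\<bar>\<^sup>2" by (simp add: power2_diff)
          moreover have "0 \<le> \<bar>a\<bar> * \<bar>b\<bar>" by simp
          ultimately show "\<bar>a * b\<bar> \<le> a\<^sup>2 + b\<^sup>2" unfolding abs_mult power2_abs by linarith
        qed
        show ?thesis by (rule h)
      qed
      then show "norm (B x \<omega> * B y \<omega>) \<le> norm ((B x \<omega>)\<^sup>2 + (B y \<omega>)\<^sup>2)" by simp
    qed
  qed simp
qed

lemma B_sq_exp: "0 \<le> x \<Longrightarrow> expectation (\<lambda>\<omega>. (B x \<omega>)\<^sup>2) = x"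
proof -
  assume x: "0 \<le> x"
  have "expectation (\<lambda>\<omega>. (B x \<omega>)\<^sup>2) = expectation (\<lambda>\<omega>. (B x \<omega> - B 0 \<omega>)\<^sup>2)"
    by (rule integral_cong_AE) (use B_AE[of x] in \<open>auto elim!: AE_mp\<close>)
  also have "\<dots> = x" using incr_moments(4)[of 0 x] x by simp
  finally show ?thesis .
qed

lemma B_cov_le:
  assumes x: "0 \<le> x" and xy: "x \<le> y"
  shows "expectation (\<lambda>\<omega>. B x \<omega> * B y \<omega>) = x"
proof (cases "x = y")
  case True then show ?thesis using B_sq_exp[OF x] by (simp add: power2_eq_square)
next
  case False
  then have xy': "x < y" using xy by simp
  show ?thesis
  proof (cases "x = 0")
    case True
    have "expectation (\<lambda>\<omega>. B x \<omega> * B y \<omega>) = expectation (\<lambda>\<omega>. 0)"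
      by (rule integral_cong_AE) (use B0_AE True in \<open>auto elim!: AE_mp\<close>)
    then show ?thesis using True by simp
  next
    case False
    then have x0: "0 < x" using x by simp
    have ind: "indep_var borel (\<lambda>\<omega>. B x \<omega> - B 0 \<omega>) borel (\<lambda>\<omega>. B y \<omega> - B x \<omega>)"
      by (rule incr_indep2) (use x0 xy' in auto)
    have i1: "integrable P (\<lambda>\<omega>. B x \<omega> - B 0 \<omega>)" using incr_moments(1)[of 0 x] x by simp
    have i2: "integrable P (\<lambda>\<omega>. B y \<omega> - B x \<omega>)" using incr_moments(1)[of x y] x xy by simp
    have "expectation (\<lambda>\<omega>. B x \<omega> * B y \<omega>) =
          expectation (\<lambda>\<omega>. (B x \<omega>)\<^sup>2 + (B x \<omega> - B 0 \<omega>) * (B y \<omega> - B x \<omega>))"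
      by (rule integral_cong_AE) (use B0_AE in \<open>auto elim!: AE_mp simp: power2_eq_square algebra_simps\<close>)
    also have "\<dots> = expectation (\<lambda>\<omega>. (B x \<omega>)\<^sup>2) + expectation (\<lambda>\<omega>. (B x \<omega> - B 0 \<omega>) * (B y \<omega> - B x \<omega>))"
      by (rule Bochner_Integration.integral_add[OF B_sq_int[OF x] indep_var_integrable[OF ind i1 i2]])
    also have "expectation (\<lambda>\<omega>. (B x \<omega> - B 0 \<omega>) * (B y \<omega> - B x \<omega>)) = 0"
      using indep_var_lebesgue_integral[OF ind i1 i2] incr_moments(3)[of x y] x xy by simp
    finally show ?thesis using B_sq_exp[OF x] by simp
  qed
qed

lemma B_cov:
  assumes "0 \<le> x" "0 \<le> y"
  shows "expectation (\<lambda>\<omega>. B x \<omega> * B y \<omega>) = min x y"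
proof (cases "x \<le> y")
  case True then show ?thesis using B_cov_le[OF assms(1) True] by simp
next
  case False
  then have "expectation (\<lambda>\<omega>. B y \<omega> * B x \<omega>) = y" using B_cov_le[OF assms(2)] by simp
  then show ?thesis using False by (simp add: mult.commute)
qed

definition Phi :: "real \<Rightarrow> real \<Rightarrow> real \<Rightarrow> 'a \<Rightarrow> real" where
  "Phi r u x \<omega> = B (min x r) \<omega> + (B (max x u) \<omega> - B u \<omega>) + (min (max x r) u - r) / (u - r) * (B u \<omega> - B r \<omega>)"

lemma cond_B:
  assumes r: "0 \<le> r" and ru: "r < u" and x: "0 \<le> x"
  shows "AE \<omega> in P. real_cond_exp P (pf_filtration P B r u) (B x) \<omega> = Phi r u x \<omega>"
proof -
  define G where "G = pf_filtration P B r u"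
  interpret sfs: sigma_finite_subalgebra P G
    unfolding G_def pf_filtration_def by (rule gen_sigma_sfs)
  have Bm: "B w \<in> borel_measurable G" if "w \<in> {0..r} \<union> {u..}" for w
    unfolding G_def pf_filtration_def using that by (rule B_meas_gen)
  show ?thesis
  proof (cases "x \<le> r")
    case True
    have "AE \<omega> in P. real_cond_exp P G (B x) \<omega> = B x \<omega>"
      by (rule sfs.real_cond_exp_F_meas[OF B_int[OF x] Bm]) (use x True in auto)
    moreover have "Phi r u x = B x" using True ru by (auto simp: Phi_def fun_eq_iff)
    ultimately show ?thesis by (simp add: G_def)
  next
    case False
    show ?thesis
    proof (cases "u \<le> x")
      case True
      have "AE \<omega> in P. real_cond_exp P G (B x) \<omega> = B x \<omega>"
        by (rule sfs.real_cond_exp_F_meas[OF B_int[OF x] Bm]) (use x True in auto)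
      moreover have "Phi r u x = B x" using True ru by (auto simp: Phi_def fun_eq_iff)
      ultimately show ?thesis by (simp add: G_def)
    next
      case False2: False
      have rx: "r < x" "x < u" using False False2 by auto
      have k: "AE \<omega> in P. real_cond_exp P G (\<lambda>\<omega>. B x \<omega> - B r \<omega>) \<omega> = (x - r) / (u - r) * (B u \<omega> - B r \<omega>)"
        unfolding G_def by (rule key[OF r rx])
      have ir: "integrable P (B r)" by (rule B_int[OF r])
      have ixr: "integrable P (\<lambda>\<omega>. B x \<omega> - B r \<omega>)" using incr_moments(1)[of r x] r rx by simp
      have a: "AE \<omega> in P. real_cond_exp P G (\<lambda>\<omega>. B r \<omega> + (B x \<omega> - B r \<omega>)) \<omega> =
                 real_cond_exp P G (B r) \<omega> + real_cond_exp P G (\<lambda>\<omega>. B x \<omega> - B r \<omega>) \<omega>"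
        by (rule sfs.real_cond_exp_add[OF ir ixr])
      have b: "AE \<omega> in P. real_cond_exp P G (B r) \<omega> = B r \<omega>"
        by (rule sfs.real_cond_exp_F_meas[OF ir Bm]) (use r in auto)
      have "(\<lambda>\<omega>. B r \<omega> + (B x \<omega> - B r \<omega>)) = B x" by auto
      then have a': "AE \<omega> in P. real_cond_exp P G (B x) \<omega> =
                 real_cond_exp P G (B r) \<omega> + real_cond_exp P G (\<lambda>\<omega>. B x \<omega> - B r \<omega>) \<omega>"
        using a by simp
      have ph: "Phi r u x \<omega> = B r \<omega> + (x - r) / (u - r) * (B u \<omega> - B r \<omega>)" for \<omega>
        using rx ru by (simp add: Phi_def)
      show ?thesis unfolding G_def[symmetric] using a' b k by eventually_elim (simp add: ph)
    qed
  qed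
qed

definition valid :: "(real \<times> real \<times> real) list \<Rightarrow> bool" where
  "valid cs \<longleftrightarrow> (\<forall>(c, a, b)\<in>set cs. 0 \<le> a \<and> a \<le> b)"

lemma valid_simps[simp]: "valid []" "valid ((c, a, b) # cs) \<longleftrightarrow> 0 \<le> a \<and> a \<le> b \<and> valid cs"
  by (auto simp: valid_def)

lemma SI_Nil[simp]: "step_integral B [] \<omega> = 0"
  by (simp add: step_integral_def)

lemma SI_Cons[simp]: "step_integral B ((c, a, b) # cs) \<omega> = c * (B b \<omega> - B a \<omega>) + step_integral B cs \<omega>"
  by (simp add: step_integral_def)

lemma SI_append: "step_integral B (cs1 @ cs2) \<omega> = step_integral B cs1 \<omega> + step_integral B cs2 \<omega>"
  by (simp add: step_integral_def)

lemma SI_meas[measurable]: "step_integral B cs \<in> borel_measurable P"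
  by (induction cs) (auto simp: step_integral_def)

lemma SI_int: "valid cs \<Longrightarrow> integrable P (step_integral B cs)"
proof (induction cs)
  case Nil then show ?case by (simp add: step_integral_def[abs_def])
next
  case (Cons p cs)
  obtain c a b where p: "p = (c, a, b)" by (cases p) auto
  have "integrable P (\<lambda>\<omega>. c * (B b \<omega> - B a \<omega>) + step_integral B cs \<omega>)"
    using Cons p B_int[of a] B_int[of b] by auto
  then show ?case using p by (simp add: SI_Cons[abs_def])
qed

definition clipO :: "real \<Rightarrow> real \<Rightarrow> (real \<times> real \<times> real) list \<Rightarrow> (real \<times> real \<times> real) list" where
  "clipO r u cs = map (\<lambda>(c, a, b). (c, min a r, min b r)) cs @ map (\<lambda>(c, a, b). (c, max a u, max b u)) cs"

definition theta :: "real \<Rightarrow> real \<Rightarrow> real \<Rightarrow> real" where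
  "theta r u x = (min (max x r) u - r) / (u - r)"

definition Theta :: "real \<Rightarrow> real \<Rightarrow> (real \<times> real \<times> real) list \<Rightarrow> real" where
  "Theta r u cs = (\<Sum>(c, a, b)\<leftarrow>cs. c * (theta r u b - theta r u a))"

lemma Theta_simps[simp]: "Theta r u [] = 0" "Theta r u ((c, a, b) # cs) = c * (theta r u b - theta r u a) + Theta r u cs"
  by (simp_all add: Theta_def)

lemma SI_clipO_Cons: "step_integral B (clipO r u ((c, a, b) # cs)) \<omega> =
   c * (B (min b r) \<omega> - B (min a r) \<omega>) + c * (B (max b u) \<omega> - B (max a u) \<omega>) + step_integral B (clipO r u cs) \<omega>"
  by (simp add: clipO_def SI_append)

lemma clipO_valid: "0 \<le> r \<Longrightarrow> valid cs \<Longrightarrow> valid (clipO r u cs)"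
  by (auto simp: valid_def clipO_def)

lemma cond_SI:
  assumes r: "0 \<le> r" and ru: "r < u" and cs: "valid cs"
  shows "AE \<omega> in P. real_cond_exp P (pf_filtration P B r u) (step_integral B cs) \<omega> =
            step_integral B (clipO r u cs) \<omega> + Theta r u cs * (B u \<omega> - B r \<omega>)"
  using cs
proof (induction cs)
  define G where "G = pf_filtration P B r u"
  interpret sfs: sigma_finite_subalgebra P G
    unfolding G_def pf_filtration_def by (rule gen_sigma_sfs)
  case Nil
  have "AE \<omega> in P. real_cond_exp P G (\<lambda>_. 0) \<omega> = 0"
    by (rule sfs.real_cond_exp_F_meas) auto
  then show ?case by (simp add: G_def step_integral_def[abs_def] clipO_def)
next
  define G where "G = pf_filtration P B r u"
  interpret sfs: sigma_finite_subalgebra P G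
    unfolding G_def pf_filtration_def by (rule gen_sigma_sfs)
  case (Cons p cs)
  obtain c a b where p: "p = (c, a, b)" by (cases p) auto
  have a: "0 \<le> a" and b: "0 \<le> b" and vcs: "valid cs" using Cons.prems p by auto
  have IH: "AE \<omega> in P. real_cond_exp P G (step_integral B cs) \<omega> =
            step_integral B (clipO r u cs) \<omega> + Theta r u cs * (B u \<omega> - B r \<omega>)"
    using Cons.IH[OF vcs] by (simp add: G_def)
  have iba: "integrable P (\<lambda>\<omega>. B b \<omega> - B a \<omega>)" using B_int[OF a] B_int[OF b] by auto
  have icba: "integrable P (\<lambda>\<omega>. c * (B b \<omega> - B a \<omega>))" using iba by auto
  have e: "step_integral B (p # cs) = (\<lambda>\<omega>. c * (B b \<omega> - B a \<omega>) + step_integral B cs \<omega>)"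
    by (simp add: p fun_eq_iff)
  have s1: "AE \<omega> in P. real_cond_exp P G (\<lambda>\<omega>. c * (B b \<omega> - B a \<omega>) + step_integral B cs \<omega>) \<omega> =
       real_cond_exp P G (\<lambda>\<omega>. c * (B b \<omega> - B a \<omega>)) \<omega> + real_cond_exp P G (step_integral B cs) \<omega>"
    by (rule sfs.real_cond_exp_add[OF icba SI_int[OF vcs]])
  have s2: "AE \<omega> in P. real_cond_exp P G (\<lambda>\<omega>. c * (B b \<omega> - B a \<omega>)) \<omega> = c * real_cond_exp P G (\<lambda>\<omega>. B b \<omega> - B a \<omega>) \<omega>"
    by (rule sfs.real_cond_exp_cmult[OF iba])
  have s3: "AE \<omega> in P. real_cond_exp P G (\<lambda>\<omega>. B b \<omega> - B a \<omega>) \<omega> = real_cond_exp P G (B b) \<omega> - real_cond_exp P G (B a) \<omega>"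
    by (rule sfs.real_cond_exp_diff[OF B_int[OF b] B_int[OF a]])
  have s4: "AE \<omega> in P. real_cond_exp P G (B b) \<omega> = Phi r u b \<omega>" unfolding G_def by (rule cond_B[OF r ru b])
  have s5: "AE \<omega> in P. real_cond_exp P G (B a) \<omega> = Phi r u a \<omega>" unfolding G_def by (rule cond_B[OF r ru a])
  have ph: "c * (Phi r u b \<omega> - Phi r u a \<omega>) + (step_integral B (clipO r u cs) \<omega> + Theta r u cs * (B u \<omega> - B r \<omega>)) =
            step_integral B (clipO r u (p # cs)) \<omega> + Theta r u (p # cs) * (B u \<omega> - B r \<omega>)" for \<omega>
    by (simp add: p SI_clipO_Cons Phi_def theta_def algebra_simps diff_divide_distrib)
  show ?case unfolding G_def[symmetric] e
    using s1 s2 s3 s4 s5 IH by eventually_elim (simp only: ph)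
qed

end

lemma int_ind_Ico: fixes a b :: real shows "(LINT x|lborel. indicator {a..<b} x :: real) = max 0 (b - a)"
proof (cases "a \<le> b")
  case True
  then have "measure lborel {a..<b} = b - a" by (simp add: measure_def)
  then show ?thesis using True by simp
next
  case False
  then have "{a..<b} = {}" by auto
  then show ?thesis using False by simp
qed

lemma integrable_ind_Ico[simp]: fixes a b :: real shows "integrable lborel (\<lambda>x. indicator {a..<b} x :: real)"
proof (cases "a \<le> b")
  case True
  have "emeasure lborel {a..<b} = ennreal (b - a)" using True by simp
  moreover have "{a..<b} \<in> sets borel" by simp
  ultimately show ?thesis by (simp add: integrable_indicator_iff)
next
  case False
  then have "{a..<b} = {}" by auto
  then show ?thesis by simp
qed

lemma int_ind_prod: fixes a b c d :: real shows "(LINT x|lborel. indicator {a..<b} x * indicator {c..<d} x :: real) = max 0 (min b d - max a c)"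
proof -
  have "(\<lambda>x. indicator {a..<b} x * indicator {c..<d} x :: real) = indicator {max a c..<min b d}"
    by (auto simp: fun_eq_iff indicator_def)
  then show ?thesis by (simp only:) (rule int_ind_Ico)
qed

lemma step_fun_Nil[simp]: "step_fun [] x = 0"
  by (simp add: step_fun_def)

lemma step_fun_Cons[simp]: "step_fun ((c, a, b) # cs) x = c * indicator {a..<b} x + step_fun cs x"
  by (simp add: step_fun_def)

lemma step_fun_append: "step_fun (cs1 @ cs2) x = step_fun cs1 x + step_fun cs2 x"
  by (simp add: step_fun_def)

lemma step_fun_meas[measurable]: "step_fun cs \<in> borel_measurable borel"
  by (induction cs) (auto simp: step_fun_def)

lemma step_fun_int[simp]: "integrable lborel (step_fun cs)"
proof (induction cs)
  case Nil then show ?case by (simp add: step_fun_def[abs_def])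
next
  case (Cons p cs)
  obtain c a b where p: "p = (c, a, b)" by (cases p) auto
  have "integrable lborel (\<lambda>x. c * indicator {a..<b} x + step_fun cs x)" using Cons by auto
  then show ?case by (simp add: p step_fun_Cons[abs_def])
qed

lemma ind_step_int: "integrable lborel (\<lambda>x. indicator {a..<b} x * step_fun cs x)"
proof (induction cs)
  case Nil then show ?case by simp
next
  case (Cons p cs)
  obtain c a' b' where p: "p = (c, a', b')" by (cases p) auto
  have e: "(\<lambda>x. indicator {a..<b} x * indicator {a'..<b'} x :: real) = indicator {max a a'..<min b b'}"
    by (auto simp: fun_eq_iff indicator_def)
  have "integrable lborel (\<lambda>x. c * (indicator {a..<b} x * indicator {a'..<b'} x) + indicator {a..<b} x * step_fun cs x)"
  proof -
    have "integrable lborel (\<lambda>x. indicator {a..<b} x * indicator {a'..<b'} x :: real)"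
      unfolding e by simp
    then show ?thesis using Cons by auto
  qed
  then show ?case by (simp add: p algebra_simps)
qed

lemma step_step_int: "integrable lborel (\<lambda>x. step_fun cs1 x * step_fun cs2 x)"
proof (induction cs1)
  case Nil then show ?case by simp
next
  case (Cons p cs)
  obtain c a b where p: "p = (c, a, b)" by (cases p) auto
  have "integrable lborel (\<lambda>x. c * (indicator {a..<b} x * step_fun cs2 x) + step_fun cs x * step_fun cs2 x)"
    using Cons ind_step_int by auto
  then show ?case by (simp add: p algebra_simps)
qed

context BM
begin

lemma incr_cov:
  assumes "0 \<le> a" "a \<le> b" "0 \<le> c" "c \<le> d"
  shows "integrable P (\<lambda>\<omega>. (B b \<omega> - B a \<omega>) * (B d \<omega> - B c \<omega>))"
    and "expectation (\<lambda>\<omega>. (B b \<omega> - B a \<omega>) * (B d \<omega> - B c \<omega>)) = max 0 (min b d - max a c)"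
proof -
  have ab: "0 \<le> b" "0 \<le> d" using assms by auto
  have e: "(\<lambda>\<omega>. (B b \<omega> - B a \<omega>) * (B d \<omega> - B c \<omega>)) =
     (\<lambda>\<omega>. B b \<omega> * B d \<omega> - B b \<omega> * B c \<omega> - B a \<omega> * B d \<omega> + B a \<omega> * B c \<omega>)"
    by (auto simp: fun_eq_iff algebra_simps)
  have i: "integrable P (\<lambda>\<omega>. B x \<omega> * B y \<omega>)" if "x \<in> {a, b}" "y \<in> {c, d}" for x y
    using that assms ab by (intro B_prod_int) auto
  show "integrable P (\<lambda>\<omega>. (B b \<omega> - B a \<omega>) * (B d \<omega> - B c \<omega>))"
    unfolding e using i by auto
  have "expectation (\<lambda>\<omega>. (B b \<omega> - B a \<omega>) * (B d \<omega> - B c \<omega>)) = min b d - min b c - min a d + min a c"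
    unfolding e using i assms ab by (simp add: B_cov)
  also have "\<dots> = max 0 (min b d - max a c)"
    using assms by (auto simp: min_def max_def)
  finally show "expectation (\<lambda>\<omega>. (B b \<omega> - B a \<omega>) * (B d \<omega> - B c \<omega>)) = max 0 (min b d - max a c)" .
qed

lemma incr_SI0:
  assumes "0 \<le> a" "a \<le> b"
  shows "valid cs \<Longrightarrow> integrable P (\<lambda>\<omega>. (B b \<omega> - B a \<omega>) * step_integral B cs \<omega>) \<and>
    expectation (\<lambda>\<omega>. (B b \<omega> - B a \<omega>) * step_integral B cs \<omega>) = (LINT x|lborel. indicator {a..<b} x * step_fun cs x)"
proof (induction cs)
  case Nil
  show ?case by simp
next
  case (Cons p cs)
  obtain c a' b' where p: "p = (c, a', b')" by (cases p) auto
  have v: "0 \<le> a'" "a' \<le> b'" "valid cs" using Cons.prems p by auto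
  note ic = incr_cov[OF assms(1,2) v(1,2)]
  note IH = Cons.IH[OF v(3)]
  have e: "(\<lambda>\<omega>. (B b \<omega> - B a \<omega>) * step_integral B (p # cs) \<omega>) =
    (\<lambda>\<omega>. c * ((B b \<omega> - B a \<omega>) * (B b' \<omega> - B a' \<omega>)) + (B b \<omega> - B a \<omega>) * step_integral B cs \<omega>)"
    by (auto simp: p fun_eq_iff algebra_simps)
  have e2: "(\<lambda>x. indicator {a..<b} x * step_fun (p # cs) x) =
    (\<lambda>x. c * (indicator {a..<b} x * indicator {a'..<b'} x) + indicator {a..<b} x * step_fun cs x :: real)"
    by (auto simp: p fun_eq_iff algebra_simps)
  have i2: "integrable lborel (\<lambda>x. indicator {a..<b} x * indicator {a'..<b'} x :: real)"
  proof -
    have "(\<lambda>x. indicator {a..<b} x * indicator {a'..<b'} x :: real) = indicator {max a a'..<min b b'}"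
      by (auto simp: fun_eq_iff indicator_def)
    then show ?thesis by simp
  qed
  show ?case unfolding e e2
    using ic IH i2 ind_step_int[of a b cs] by (simp add: int_ind_prod)
qed

lemma incr_SI:
  assumes "0 \<le> a" "a \<le> b" "valid cs"
  shows "integrable P (\<lambda>\<omega>. (B b \<omega> - B a \<omega>) * step_integral B cs \<omega>)"
    and "expectation (\<lambda>\<omega>. (B b \<omega> - B a \<omega>) * step_integral B cs \<omega>) = (LINT x|lborel. indicator {a..<b} x * step_fun cs x)"
  using incr_SI0[OF assms(1,2) assms(3)] by auto

lemma SI_bilin0:
  assumes "valid cs2"
  shows "valid cs1 \<Longrightarrow> integrable P (\<lambda>\<omega>. step_integral B cs1 \<omega> * step_integral B cs2 \<omega>) \<and>
    expectation (\<lambda>\<omega>. step_integral B cs1 \<omega> * step_integral B cs2 \<omega>) = (LINT x|lborel. step_fun cs1 x * step_fun cs2 x)"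
proof (induction cs1)
  case Nil
  show ?case by simp
next
  case (Cons p cs)
  obtain c a b where p: "p = (c, a, b)" by (cases p) auto
  have v: "0 \<le> a" "a \<le> b" "valid cs" using Cons.prems p by auto
  note ic = incr_SI[OF v(1,2) assms(1)]
  note IH = Cons.IH[OF v(3)]
  have e: "(\<lambda>\<omega>. step_integral B (p # cs) \<omega> * step_integral B cs2 \<omega>) =
    (\<lambda>\<omega>. c * ((B b \<omega> - B a \<omega>) * step_integral B cs2 \<omega>) + step_integral B cs \<omega> * step_integral B cs2 \<omega>)"
    by (auto simp: p fun_eq_iff algebra_simps)
  have e2: "(\<lambda>x. step_fun (p # cs) x * step_fun cs2 x) =
    (\<lambda>x. c * (indicator {a..<b} x * step_fun cs2 x) + step_fun cs x * step_fun cs2 x)"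
    by (auto simp: p fun_eq_iff algebra_simps)
  show ?case unfolding e e2
    using ic IH ind_step_int[of a b cs2] step_step_int[of cs cs2] by simp
qed

lemma SI_bilin:
  assumes "valid cs1" "valid cs2"
  shows "integrable P (\<lambda>\<omega>. step_integral B cs1 \<omega> * step_integral B cs2 \<omega>)"
    and "expectation (\<lambda>\<omega>. step_integral B cs1 \<omega> * step_integral B cs2 \<omega>) = (LINT x|lborel. step_fun cs1 x * step_fun cs2 x)"
  using SI_bilin0[OF assms(2) assms(1)] by auto

lemma SI_iso:
  assumes "valid cs1" "valid cs2"
  shows "integrable P (\<lambda>\<omega>. (step_integral B cs1 \<omega> - step_integral B cs2 \<omega>)\<^sup>2)"
    and "expectation (\<lambda>\<omega>. (step_integral B cs1 \<omega> - step_integral B cs2 \<omega>)\<^sup>2) =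
         (LINT x|lborel. (step_fun cs1 x - step_fun cs2 x)\<^sup>2)"
proof -
  have e: "(\<lambda>\<omega>. (step_integral B cs1 \<omega> - step_integral B cs2 \<omega>)\<^sup>2) =
     (\<lambda>\<omega>. step_integral B cs1 \<omega> * step_integral B cs1 \<omega> - 2 * (step_integral B cs1 \<omega> * step_integral B cs2 \<omega>)
          + step_integral B cs2 \<omega> * step_integral B cs2 \<omega>)"
    by (auto simp: fun_eq_iff power2_eq_square algebra_simps)
  have e2: "(\<lambda>x. (step_fun cs1 x - step_fun cs2 x)\<^sup>2) =
     (\<lambda>x. step_fun cs1 x * step_fun cs1 x - 2 * (step_fun cs1 x * step_fun cs2 x) + step_fun cs2 x * step_fun cs2 x)"
    by (auto simp: fun_eq_iff power2_eq_square algebra_simps)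
  note b11 = SI_bilin[OF assms(1) assms(1)] and b12 = SI_bilin[OF assms(1) assms(2)] and b22 = SI_bilin[OF assms(2) assms(2)]
  show "integrable P (\<lambda>\<omega>. (step_integral B cs1 \<omega> - step_integral B cs2 \<omega>)\<^sup>2)"
    unfolding e using b11 b12 b22 by auto
  show "expectation (\<lambda>\<omega>. (step_integral B cs1 \<omega> - step_integral B cs2 \<omega>)\<^sup>2) =
         (LINT x|lborel. (step_fun cs1 x - step_fun cs2 x)\<^sup>2)"
    unfolding e e2 using b11 b12 b22 step_step_int[of cs1 cs1] step_step_int[of cs1 cs2] step_step_int[of cs2 cs2]
    by simp
qed

end

lemma nn_to_real:
  fixes f :: "'a \<Rightarrow> real"
  assumes f[measurable]: "f \<in> borel_measurable M" and nn: "\<And>x. 0 \<le> f x"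
    and lt: "(\<integral>\<^sup>+x. ennreal (f x) \<partial>M) < ennreal e"
  shows "integrable M f" "integral\<^sup>L M f < e"
proof -
  show i: "integrable M f"
    by (rule integrableI_nonneg) (use nn lt in \<open>auto intro: less_le_trans[OF _ top_greatest]\<close>)
  have "(\<integral>\<^sup>+x. ennreal (f x) \<partial>M) = ennreal (integral\<^sup>L M f)"
    by (rule nn_integral_eq_integral[OF i]) (use nn in auto)
  then have "ennreal (integral\<^sup>L M f) < ennreal e" using lt by simp
  moreover have "0 \<le> integral\<^sup>L M f" using nn by (simp add: Bochner_Integration.integral_nonneg)
  ultimately show "integral\<^sup>L M f < e"
    using ennreal_less_iff[of "integral\<^sup>L M f" e] by auto
qed

lemma abs_le_sq:
  fixes y \<eta> :: real
  assumes "0 < \<eta>"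
  shows "\<bar>y\<bar> \<le> y\<^sup>2 / \<eta> + \<eta>"
proof (cases "\<bar>y\<bar> \<le> \<eta>")
  case True
  have "0 \<le> y\<^sup>2 / \<eta>" using assms by simp
  then show ?thesis using True by linarith
next
  case False
  then have "\<eta> * \<bar>y\<bar> \<le> \<bar>y\<bar> * \<bar>y\<bar>" using assms by (intro mult_right_mono) auto
  then have "\<bar>y\<bar> \<le> y\<^sup>2 / \<eta>" using assms by (simp add: field_simps power2_eq_square abs_mult_self_eq)
  then show ?thesis using assms by linarith
qed

lemma L1_from_L2:
  fixes Y :: "'a \<Rightarrow> real"
  assumes "finite_measure M" and Ym[measurable]: "Y \<in> borel_measurable M"
    and Y2: "integrable M (\<lambda>x. (Y x)\<^sup>2)" and \<eta>: "0 < \<eta>"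
  shows "integrable M Y" "integrable M (\<lambda>x. \<bar>Y x\<bar>)"
    "(\<integral>x. \<bar>Y x\<bar> \<partial>M) \<le> (\<integral>x. (Y x)\<^sup>2 \<partial>M) / \<eta> + \<eta> * measure M (space M)"
proof -
  interpret finite_measure M by fact
  have ib: "integrable M (\<lambda>x. (Y x)\<^sup>2 / \<eta> + \<eta>)" using Y2 by auto
  show iY: "integrable M Y"
    by (rule Bochner_Integration.integrable_bound[OF ib]) (use abs_le_sq[OF \<eta>] \<eta> in \<open>auto intro!: AE_I2 simp: abs_le_iff\<close>)
  show "integrable M (\<lambda>x. \<bar>Y x\<bar>)" using iY by auto
  have "(\<integral>x. \<bar>Y x\<bar> \<partial>M) \<le> (\<integral>x. (Y x)\<^sup>2 / \<eta> + \<eta> \<partial>M)"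
    by (rule integral_mono) (use iY ib abs_le_sq[OF \<eta>] in auto)
  also have "\<dots> = (\<integral>x. (Y x)\<^sup>2 \<partial>M) / \<eta> + \<eta> * measure M (space M)"
    using Y2 by simp
  finally show "(\<integral>x. \<bar>Y x\<bar> \<partial>M) \<le> (\<integral>x. (Y x)\<^sup>2 \<partial>M) / \<eta> + \<eta> * measure M (space M)" .
qed

lemma step_support:
  assumes "\<forall>(c, a, b)\<in>set cs. {a..b} \<subseteq> T" "x \<notin> T"
  shows "step_fun cs x = 0"
  using assms
proof (induction cs)
  case Nil then show ?case by simp
next
  case (Cons p cs)
  obtain c a b where p: "p = (c, a, b)" by (cases p) auto
  have "{a..<b} \<subseteq> T" using Cons.prems p by auto
  then have "indicator {a..<b} x = (0::real)" using Cons.prems by (auto simp: indicator_def)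
  then show ?case using Cons p by auto
qed

lemma step_mid_zero:
  assumes cs: "\<forall>(c, a, b)\<in>set cs. {a..b} \<subseteq> SO" and SO: "SO \<inter> {r<..<u} = {}"
    and x: "r \<le> x" "x < u"
  shows "step_fun cs x = 0"
  using cs
proof (induction cs)
  case Nil then show ?case by simp
next
  case (Cons p cs)
  obtain c a b where p: "p = (c, a, b)" by (cases p) auto
  have sub: "{a..b} \<subseteq> SO" using Cons.prems p by auto
  have "x \<notin> {a..<b}"
  proof
    assume xa: "x \<in> {a..<b}"
    define y where "y = (x + min b u) / 2"
    have "x < y" "y < min b u" using xa x by (auto simp: y_def)
    then have "y \<in> {a..b}" "y \<in> {r<..<u}" using xa x by auto
    then show False using sub SO by blast
  qed
  then have "indicator {a..<b} x = (0::real)" by simp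
  then show ?case using Cons p by auto
qed

context BM
begin

lemma clipO_step:
  assumes "r < u"
  shows "step_fun (clipO r u cs) x = indicator ({..<r} \<union> {u..}) x * step_fun cs x"
proof (induction cs)
  case Nil then show ?case by (simp add: clipO_def)
next
  case (Cons p cs)
  obtain c a b where p: "p = (c, a, b)" by (cases p) auto
  have e: "step_fun (clipO r u (p # cs)) x = c * indicator {min a r..<min b r} x + c * indicator {max a u..<max b u} x + step_fun (clipO r u cs) x"
    by (simp add: p clipO_def step_fun_append)
  have i: "indicator {min a r..<min b r} x + indicator {max a u..<max b u} x = (indicator ({..<r} \<union> {u..}) x * indicator {a..<b} x :: real)"
    using assms by (auto simp: indicator_def min_def max_def)
  show ?case unfolding e Cons.IH using i
    by (simp add: p algebra_simps) (metis distrib_left i mult.commute)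
qed

lemma Theta_int:
  assumes ru: "r < u"
  shows "valid cs \<Longrightarrow> Theta r u cs * (u - r) = (LINT x|lborel. indicator {r..<u} x * step_fun cs x)"
proof (induction cs)
  case Nil then show ?case by simp
next
  case (Cons p cs)
  obtain c a b where p: "p = (c, a, b)" by (cases p) auto
  have v: "a \<le> b" "valid cs" using Cons.prems p by auto
  have e: "(\<lambda>x. indicator {r..<u} x * step_fun (p # cs) x) =
     (\<lambda>x. c * (indicator {r..<u} x * indicator {a..<b} x) + indicator {r..<u} x * step_fun cs x :: real)"
    by (auto simp: p fun_eq_iff algebra_simps)
  have i1: "integrable lborel (\<lambda>x. indicator {r..<u} x * indicator {a..<b} x :: real)"
  proof -
    have "(\<lambda>x. indicator {r..<u} x * indicator {a..<b} x :: real) = indicator {max r a..<min u b}"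
      by (auto simp: fun_eq_iff indicator_def)
    then show ?thesis by simp
  qed
  have th: "(theta r u b - theta r u a) * (u - r) = max 0 (min u b - max r a)"
  proof -
    have d: "u - r \<noteq> 0" using ru by simp
    have "theta r u b - theta r u a = (min (max b r) u - min (max a r) u) / (u - r)"
      by (simp add: theta_def diff_divide_distrib)
    then have "(theta r u b - theta r u a) * (u - r) = min (max b r) u - min (max a r) u"
      using d by simp
    also have "\<dots> = max 0 (min u b - max r a)" using v ru by (auto simp: min_def max_def)
    finally show ?thesis .
  qed
  have "Theta r u (p # cs) * (u - r) = c * ((theta r u b - theta r u a) * (u - r)) + Theta r u cs * (u - r)"
    by (simp add: p algebra_simps)
  also have "\<dots> = c * max 0 (min u b - max r a) + (LINT x|lborel. indicator {r..<u} x * step_fun cs x)"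
    using Cons.IH[OF v(2)] th by simp
  also have "\<dots> = (LINT x|lborel. indicator {r..<u} x * step_fun (p # cs) x)"
    unfolding e using i1 ind_step_int[of r u cs] by (simp add: int_ind_prod)
  finally show ?case .
qed

lemma step_clip_est:
  assumes ru: "r < u"
    and cs: "\<forall>(c, a, b)\<in>set cs. {a..b} \<subseteq> S" and csO: "\<forall>(c, a, b)\<in>set csO. {a..b} \<subseteq> SO"
    and SO: "SO \<subseteq> S" "SO \<inter> {r<..<u} = {}" "S \<inter> ({..<r} \<union> {u..}) \<subseteq> SO"
  shows "(step_fun (clipO r u cs) x - step_fun csO x)\<^sup>2 \<le>
         2 * (indicator S x * (g x - step_fun cs x)\<^sup>2) + 2 * (indicator SO x * (g x - step_fun csO x)\<^sup>2)"
proof -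
  have rhs: "0 \<le> 2 * (indicator S x * (g x - step_fun cs x)\<^sup>2) + 2 * (indicator SO x * (g x - step_fun csO x)\<^sup>2)"
    by simp
  show ?thesis
  proof (cases "x \<in> {r..<u}")
    case True
    have "step_fun (clipO r u cs) x = 0" using True ru by (simp add: clipO_step[OF ru])
    moreover have "step_fun csO x = 0" using True by (intro step_mid_zero[OF csO SO(2)]) auto
    ultimately show ?thesis using rhs by simp
  next
    case False
    then have out: "x \<in> {..<r} \<union> {u..}" by auto
    have cl: "step_fun (clipO r u cs) x = step_fun cs x" using out by (simp add: clipO_step[OF ru])
    show ?thesis
    proof (cases "x \<in> S")
      case True
      then have xSO: "x \<in> SO" using out SO(3) by auto
      have "(step_fun cs x - step_fun csO x)\<^sup>2 \<le> 2 * (g x - step_fun cs x)\<^sup>2 + 2 * (g x - step_fun csO x)\<^sup>2"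
      proof -
        have "0 \<le> ((g x - step_fun cs x) + (g x - step_fun csO x))\<^sup>2" by simp
        then show ?thesis by (simp add: power2_eq_square algebra_simps)
      qed
      then show ?thesis using True xSO cl by simp
    next
      case False
      then have "x \<notin> SO" using SO(1) by auto
      then have "step_fun csO x = 0" by (rule step_support[OF csO])
      moreover have "step_fun cs x = 0" using False by (rule step_support[OF cs])
      ultimately show ?thesis using rhs cl by simp
    qed
  qed
qed

lemma wiener_approx:
  assumes W: "wiener_integral P B f S X" and S: "S \<subseteq> {0..}" "S \<in> sets borel"
    and fm: "(\<lambda>x. indicator {0..} x * f x) \<in> borel_measurable borel" and e: "0 < e"
  shows "\<exists>cs. (\<forall>(c, a, b)\<in>set cs. a \<le> b \<and> {a..b} \<subseteq> S) \<and> valid cs \<and>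
     integrable lborel (\<lambda>x. indicator S x * (indicator {0..} x * f x - step_fun cs x)\<^sup>2) \<and>
     (LINT x|lborel. indicator S x * (indicator {0..} x * f x - step_fun cs x)\<^sup>2) < e \<and>
     integrable P (\<lambda>\<omega>. (X \<omega> - step_integral B cs \<omega>)\<^sup>2) \<and>
     expectation (\<lambda>\<omega>. (X \<omega> - step_integral B cs \<omega>)\<^sup>2) < e"
proof -
  have Xm: "X \<in> borel_measurable (gen_sigma P B S)" using W unfolding wiener_integral_def by (rule conjunct1)
  then have Xm'[measurable]: "X \<in> borel_measurable P" by (rule from_gen)
  obtain cs where cs: "\<forall>(c, a, b)\<in>set cs. a \<le> b \<and> {a..b} \<subseteq> S"
    and l1: "(\<integral>\<^sup>+ u\<in>S. ennreal ((f u - step_fun cs u)\<^sup>2) \<partial>lborel) < ennreal e"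
    and l2: "(\<integral>\<^sup>+ \<omega>. ennreal ((X \<omega> - step_integral B cs \<omega>)\<^sup>2) \<partial>P) < ennreal e"
    using W e unfolding wiener_integral_def by blast
  have v: "valid cs" using cs S unfolding valid_def by fastforce
  have Sm[measurable]: "S \<in> sets borel" by (rule S(2))
  have gm: "(\<lambda>x. indicator S x * (indicator {0..} x * f x - step_fun cs x)\<^sup>2) \<in> borel_measurable lborel"
    using fm by measurable
  have "(\<integral>\<^sup>+ x. ennreal (indicator S x * (indicator {0..} x * f x - step_fun cs x)\<^sup>2) \<partial>lborel) =
        (\<integral>\<^sup>+ u\<in>S. ennreal ((f u - step_fun cs u)\<^sup>2) \<partial>lborel)"
    by (intro nn_integral_cong) (use S in \<open>auto simp: indicator_def\<close>)
  then have l1': "(\<integral>\<^sup>+ x. ennreal (indicator S x * (indicator {0..} x * f x - step_fun cs x)\<^sup>2) \<partial>lborel) < ennreal e"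
    using l1 by simp
  note r1 = nn_to_real[OF gm _ l1']
  note r2 = nn_to_real[OF _ _ l2]
  show ?thesis using cs v r1 r2 by auto
qed

lemma wiener_int:
  assumes W: "wiener_integral P B f S X" and S: "S \<subseteq> {0..}" "S \<in> sets borel"
    and fm: "(\<lambda>x. indicator {0..} x * f x) \<in> borel_measurable borel"
  shows "integrable P X"
proof -
  have "X \<in> borel_measurable (gen_sigma P B S)" using W unfolding wiener_integral_def by (rule conjunct1)
  then have Xm[measurable]: "X \<in> borel_measurable P" by (rule from_gen)
  obtain cs where v: "valid cs" and i2: "integrable P (\<lambda>\<omega>. (X \<omega> - step_integral B cs \<omega>)\<^sup>2)"
    using wiener_approx[OF W S fm, of 1] by auto
  have "integrable P (\<lambda>\<omega>. X \<omega> - step_integral B cs \<omega>)"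
    by (rule L1_from_L2(1)[OF _ _ i2, of 1]) (auto intro: finite_measure_axioms)
  then have "integrable P (\<lambda>\<omega>. (X \<omega> - step_integral B cs \<omega>) + step_integral B cs \<omega>)"
    by (rule Bochner_Integration.integrable_add) (rule SI_int[OF v])
  then show ?thesis by simp
qed

end

lemma step_diff_sq_int: "integrable lborel (\<lambda>x. (step_fun cs1 x - step_fun cs2 x)\<^sup>2)"
proof -
  have e: "(\<lambda>x. (step_fun cs1 x - step_fun cs2 x)\<^sup>2) =
     (\<lambda>x. step_fun cs1 x * step_fun cs1 x - 2 * (step_fun cs1 x * step_fun cs2 x) + step_fun cs2 x * step_fun cs2 x)"
    by (auto simp: fun_eq_iff power2_eq_square algebra_simps)
  show ?thesis unfolding e using step_step_int[of cs1 cs1] step_step_int[of cs1 cs2] step_step_int[of cs2 cs2] by auto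
qed

context BM
begin

lemma cond_wiener:
  assumes r: "0 \<le> r" and ru: "r < u"
    and fi: "set_integrable lborel {0..} f"
    and S: "S \<subseteq> {0..}" "S \<in> sets borel"
    and SO: "SO \<in> sets borel" "SO \<subseteq> S" "SO \<inter> {r<..<u} = {}" "S \<inter> ({..<r} \<union> {u..}) \<subseteq> SO"
    and X: "wiener_integral P B f S X" and XO: "wiener_integral P B f SO XO"
  shows "AE \<omega> in P. real_cond_exp P (pf_filtration P B r u) X \<omega> =
           XO \<omega> + ((LINT x:S|lborel. f x) - (LINT x:SO|lborel. f x)) / (u - r) * (B u \<omega> - B r \<omega>)"
proof -
  define G where "G = pf_filtration P B r u"
  interpret sfs: sigma_finite_subalgebra P G
    unfolding G_def pf_filtration_def by (rule gen_sigma_sfs)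
  define f0 where "f0 x = indicator {0..} x * f x" for x
  have f0i: "integrable lborel f0"
    using fi unfolding set_integrable_def f0_def[abs_def] by simp
  have f0m[measurable]: "f0 \<in> borel_measurable borel" using f0i by auto
  have f0m': "(\<lambda>x. indicator {0..} x * f x) \<in> borel_measurable borel" using f0m by (simp add: f0_def[abs_def])
  have Sm[measurable]: "S \<in> sets borel" "SO \<in> sets borel" using S SO by auto
  have SO0: "SO \<subseteq> {0..}" using SO S by auto
  have f0Si: "integrable lborel (\<lambda>x. indicator S x * f0 x)" using integrable_mult_indicator[of S lborel f0] f0i by simp
  have f0SOi: "integrable lborel (\<lambda>x. indicator SO x * f0 x)" using integrable_mult_indicator[of SO lborel f0] f0i by simp
  define c where "c = ((LINT x:S|lborel. f x) - (LINT x:SO|lborel. f x)) / (u - r)"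
  have cint: "c * (u - r) = (LINT x|lborel. indicator {r..<u} x * (indicator S x * f0 x))"
  proof -
    have e1: "(LINT x:S|lborel. f x) = (LINT x|lborel. indicator S x * f0 x)"
      unfolding set_lebesgue_integral_def using S(1)
      by (intro Bochner_Integration.integral_cong) (auto simp: f0_def indicator_def)
    have e2: "(LINT x:SO|lborel. f x) = (LINT x|lborel. indicator SO x * f0 x)"
      unfolding set_lebesgue_integral_def using SO0
      by (intro Bochner_Integration.integral_cong) (auto simp: f0_def indicator_def)
    have "c * (u - r) = (LINT x|lborel. indicator S x * f0 x) - (LINT x|lborel. indicator SO x * f0 x)"
      using ru by (simp add: c_def e1 e2)
    also have "\<dots> = (LINT x|lborel. indicator S x * f0 x - indicator SO x * f0 x)"
      using f0Si f0SOi by simp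
    also have "\<dots> = (LINT x|lborel. indicator {r..<u} x * (indicator S x * f0 x))"
    proof (rule integral_cong_AE)
      show "AE x in lborel. indicator S x * f0 x - indicator SO x * f0 x = indicator {r..<u} x * (indicator S x * f0 x)"
        using AE_lborel_singleton[of r]
      proof eventually_elim
        case (elim x)
        show ?case
        proof (cases "x \<in> S")
          case True
          show ?thesis
          proof (cases "x \<in> {r..<u}")
            case True2: True
            then have "x \<in> {r<..<u}" using elim by auto
            then have "x \<notin> SO" using SO(3) by auto
            then show ?thesis using True True2 by simp
          next
            case False
            then have "x \<in> SO" using True SO(4) by auto
            then show ?thesis using True False by simp
          qed
        next
          case False
          then have "x \<notin> SO" using SO(2) by auto
          then show ?thesis using False by simp
        qed
      qed
    qed auto
    finally show ?thesis .
  qed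
  have Xi: "integrable P X" by (rule wiener_int[OF X S f0m'])
  have XOi: "integrable P XO" by (rule wiener_int[OF XO SO0 SO(1) f0m'])
  have Xm[measurable]: "X \<in> borel_measurable P" using Xi by auto
  have XOm[measurable]: "XO \<in> borel_measurable P" using XOi by auto
  have Si: "integrable P (\<lambda>\<omega>. B u \<omega> - B r \<omega>)" using B_int[of u] B_int[OF r] r ru by auto
  define KS where "KS = expectation (\<lambda>\<omega>. \<bar>B u \<omega> - B r \<omega>\<bar>)"
  have KS0: "0 \<le> KS" unfolding KS_def by simp
  define D where "D \<omega> = real_cond_exp P G X \<omega> - (XO \<omega> + c * (B u \<omega> - B r \<omega>))" for \<omega>
  have CXi: "integrable P (real_cond_exp P G X)" by (rule sfs.real_cond_exp_int(1)[OF Xi])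
  have Di: "integrable P D" unfolding D_def using CXi XOi Si by auto
  have Dm[measurable]: "D \<in> borel_measurable P" using Di by auto
  define K where "K = 9 + (1 + (u - r)) / (u - r) * KS"
  have K0: "0 \<le> K" unfolding K_def using KS0 ru by simp
  have main: "expectation (\<lambda>\<omega>. \<bar>D \<omega>\<bar>) \<le> K * \<eta>" if \<eta>: "0 < \<eta>" for \<eta>
  proof -
    define \<delta> where "\<delta> = \<eta>\<^sup>2"
    have \<delta>: "0 < \<delta>" using \<eta> by (simp add: \<delta>_def)
    obtain cs where cs: "\<forall>(c, a, b)\<in>set cs. a \<le> b \<and> {a..b} \<subseteq> S" and v: "valid cs"
      and li: "integrable lborel (\<lambda>x. indicator S x * (f0 x - step_fun cs x)\<^sup>2)"
      and ll: "(LINT x|lborel. indicator S x * (f0 x - step_fun cs x)\<^sup>2) < \<delta>"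
      and pi: "integrable P (\<lambda>\<omega>. (X \<omega> - step_integral B cs \<omega>)\<^sup>2)"
      and pl: "expectation (\<lambda>\<omega>. (X \<omega> - step_integral B cs \<omega>)\<^sup>2) < \<delta>"
      using wiener_approx[OF X S f0m' \<delta>] unfolding f0_def by blast
    obtain csO where csO: "\<forall>(c, a, b)\<in>set csO. a \<le> b \<and> {a..b} \<subseteq> SO" and vO: "valid csO"
      and liO: "integrable lborel (\<lambda>x. indicator SO x * (f0 x - step_fun csO x)\<^sup>2)"
      and llO: "(LINT x|lborel. indicator SO x * (f0 x - step_fun csO x)\<^sup>2) < \<delta>"
      and piO: "integrable P (\<lambda>\<omega>. (XO \<omega> - step_integral B csO \<omega>)\<^sup>2)"
      and plO: "expectation (\<lambda>\<omega>. (XO \<omega> - step_integral B csO \<omega>)\<^sup>2) < \<delta>"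
      using wiener_approx[OF XO SO0 SO(1) f0m' \<delta>] unfolding f0_def by blast
    have cs': "\<forall>(c, a, b)\<in>set cs. {a..b} \<subseteq> S" using cs by auto
    have csO': "\<forall>(c, a, b)\<in>set csO. {a..b} \<subseteq> SO" using csO by auto
    have vC: "valid (clipO r u cs)" by (rule clipO_valid[OF r v])
    have fm: "finite_measure P" by (rule finite_measure_axioms)
    have sp: "measure P (space P) = 1" by (rule prob_space)
    have Y1m: "(\<lambda>\<omega>. X \<omega> - step_integral B cs \<omega>) \<in> borel_measurable P" by measurable
    note L1 = L1_from_L2[OF fm Y1m pi \<eta>]
    have t1: "expectation (\<lambda>\<omega>. \<bar>real_cond_exp P G (\<lambda>\<omega>. X \<omega> - step_integral B cs \<omega>) \<omega>\<bar>) \<le> 2 * \<eta>"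
    proof -
      have "expectation (\<lambda>\<omega>. \<bar>real_cond_exp P G (\<lambda>\<omega>. X \<omega> - step_integral B cs \<omega>) \<omega>\<bar>) \<le>
            expectation (\<lambda>\<omega>. \<bar>X \<omega> - step_integral B cs \<omega>\<bar>)"
        by (rule sfs.cond_abs_le[OF L1(1)])
      also have "\<dots> \<le> expectation (\<lambda>\<omega>. (X \<omega> - step_integral B cs \<omega>)\<^sup>2) / \<eta> + \<eta>"
        using L1(3) sp by simp
      also have "\<dots> \<le> \<delta> / \<eta> + \<eta>" using pl \<eta> by (simp add: divide_right_mono)
      also have "\<dots> = 2 * \<eta>" using \<eta> by (simp add: \<delta>_def power2_eq_square)
      finally show ?thesis .
    qed
    have Y3m: "(\<lambda>\<omega>. XO \<omega> - step_integral B csO \<omega>) \<in> borel_measurable P" by measurable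
    note L3 = L1_from_L2[OF fm Y3m piO \<eta>]
    have t3: "expectation (\<lambda>\<omega>. \<bar>XO \<omega> - step_integral B csO \<omega>\<bar>) \<le> 2 * \<eta>"
    proof -
      have "expectation (\<lambda>\<omega>. \<bar>XO \<omega> - step_integral B csO \<omega>\<bar>) \<le> expectation (\<lambda>\<omega>. (XO \<omega> - step_integral B csO \<omega>)\<^sup>2) / \<eta> + \<eta>"
        using L3(3) sp by simp
      also have "\<dots> \<le> \<delta> / \<eta> + \<eta>" using plO \<eta> by (simp add: divide_right_mono)
      also have "\<dots> = 2 * \<eta>" using \<eta> by (simp add: \<delta>_def power2_eq_square)
      finally show ?thesis .
    qed
    note iso = SI_iso[OF vC vO]
    have Y2m: "(\<lambda>\<omega>. step_integral B (clipO r u cs) \<omega> - step_integral B csO \<omega>) \<in> borel_measurable P" by measurable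
    note L2 = L1_from_L2[OF fm Y2m iso(1) \<eta>]
    have est: "(LINT x|lborel. (step_fun (clipO r u cs) x - step_fun csO x)\<^sup>2) \<le> 4 * \<delta>"
    proof -
      have "(LINT x|lborel. (step_fun (clipO r u cs) x - step_fun csO x)\<^sup>2) \<le>
            (LINT x|lborel. 2 * (indicator S x * (f0 x - step_fun cs x)\<^sup>2) + 2 * (indicator SO x * (f0 x - step_fun csO x)\<^sup>2))"
        by (rule integral_mono[OF step_diff_sq_int]) (use li liO step_clip_est[OF ru cs' csO' SO(2,3,4)] in auto)
      also have "\<dots> = 2 * (LINT x|lborel. indicator S x * (f0 x - step_fun cs x)\<^sup>2) + 2 * (LINT x|lborel. indicator SO x * (f0 x - step_fun csO x)\<^sup>2)"
        using li liO by simp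
      also have "\<dots> \<le> 4 * \<delta>" using ll llO by simp
      finally show ?thesis .
    qed
    have t2: "expectation (\<lambda>\<omega>. \<bar>step_integral B (clipO r u cs) \<omega> - step_integral B csO \<omega>\<bar>) \<le> 5 * \<eta>"
    proof -
      have "expectation (\<lambda>\<omega>. \<bar>step_integral B (clipO r u cs) \<omega> - step_integral B csO \<omega>\<bar>) \<le>
            expectation (\<lambda>\<omega>. (step_integral B (clipO r u cs) \<omega> - step_integral B csO \<omega>)\<^sup>2) / \<eta> + \<eta>"
        using L2(3) sp by simp
      also have "\<dots> \<le> 4 * \<delta> / \<eta> + \<eta>" using est iso(2) \<eta> by (simp add: divide_right_mono)
      also have "\<dots> = 5 * \<eta>" using \<eta> by (simp add: \<delta>_def power2_eq_square)
      finally show ?thesis .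
    qed
    have t4: "\<bar>Theta r u cs - c\<bar> \<le> \<eta> * (1 + (u - r)) / (u - r)"
    proof -
      have ur: "0 < u - r" using ru by simp
      have ms: "indicator {r..<u} x * step_fun cs x = indicator {r..<u} x * (indicator S x * step_fun cs x)" for x
        using step_support[OF cs', of x] by (cases "x \<in> S") auto
      have iM: "integrable lborel (\<lambda>x. indicator {r..<u} x * step_fun cs x)" by (rule ind_step_int)
      have iMf: "integrable lborel (\<lambda>x. indicator {r..<u} x * (indicator S x * f0 x))"
        using integrable_mult_indicator[of "{r..<u}" lborel "\<lambda>x. indicator S x * f0 x"] f0Si by simp
      have "(Theta r u cs - c) * (u - r) = (LINT x|lborel. indicator {r..<u} x * step_fun cs x) - (LINT x|lborel. indicator {r..<u} x * (indicator S x * f0 x))"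
        using Theta_int[OF ru v] cint by (simp add: algebra_simps)
      also have "\<dots> = (LINT x|lborel. indicator {r..<u} x * step_fun cs x - indicator {r..<u} x * (indicator S x * f0 x))"
        using iM iMf by simp
      finally have eq: "(Theta r u cs - c) * (u - r) = (LINT x|lborel. indicator {r..<u} x * step_fun cs x - indicator {r..<u} x * (indicator S x * f0 x))" .
      have bnd: "\<bar>indicator {r..<u} x * step_fun cs x - indicator {r..<u} x * (indicator S x * f0 x)\<bar> \<le>
                 indicator S x * (f0 x - step_fun cs x)\<^sup>2 / \<eta> + \<eta> * indicator {r..<u} x" for x
      proof -
        have "\<bar>indicator {r..<u} x * step_fun cs x - indicator {r..<u} x * (indicator S x * f0 x)\<bar> =
              indicator {r..<u} x * (indicator S x * \<bar>f0 x - step_fun cs x\<bar>)"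
          unfolding ms by (auto simp: indicator_def abs_minus_commute)
        also have "\<dots> \<le> indicator {r..<u} x * (indicator S x * ((f0 x - step_fun cs x)\<^sup>2 / \<eta> + \<eta>))"
          using abs_le_sq[OF \<eta>, of "f0 x - step_fun cs x"] by (auto simp: indicator_def)
        also have "\<dots> \<le> indicator S x * (f0 x - step_fun cs x)\<^sup>2 / \<eta> + \<eta> * indicator {r..<u} x"
          using \<eta> by (auto simp: indicator_def)
        finally show ?thesis .
      qed
      have ib: "integrable lborel (\<lambda>x. indicator S x * (f0 x - step_fun cs x)\<^sup>2 / \<eta> + \<eta> * indicator {r..<u} x :: real)"
        using li by simp
      have "\<bar>(Theta r u cs - c) * (u - r)\<bar> \<le> (LINT x|lborel. indicator S x * (f0 x - step_fun cs x)\<^sup>2 / \<eta> + \<eta> * indicator {r..<u} x)"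
        unfolding eq by (rule integral_abs_bound_integral[OF _ ib]) (use iM iMf bnd in auto)
      also have "\<dots> = (LINT x|lborel. indicator S x * (f0 x - step_fun cs x)\<^sup>2) / \<eta> + \<eta> * (u - r)"
        using li ur by (simp add: int_ind_Ico)
      also have "\<dots> \<le> \<delta> / \<eta> + \<eta> * (u - r)" using ll \<eta> by (simp add: divide_right_mono)
      also have "\<dots> = \<eta> * (1 + (u - r))" using \<eta> by (simp add: \<delta>_def power2_eq_square algebra_simps)
      finally have "\<bar>Theta r u cs - c\<bar> * (u - r) \<le> \<eta> * (1 + (u - r))" using ur by (simp add: abs_mult)
      then show ?thesis using ur by (simp add: field_simps)
    qed
    have d1: "AE \<omega> in P. real_cond_exp P G (\<lambda>\<omega>. X \<omega> - step_integral B cs \<omega>) \<omega> =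
                real_cond_exp P G X \<omega> - real_cond_exp P G (step_integral B cs) \<omega>"
      by (rule sfs.real_cond_exp_diff[OF Xi SI_int[OF v]])
    have d2: "AE \<omega> in P. real_cond_exp P G (step_integral B cs) \<omega> =
            step_integral B (clipO r u cs) \<omega> + Theta r u cs * (B u \<omega> - B r \<omega>)"
      unfolding G_def by (rule cond_SI[OF r ru v])
    define R where "R \<omega> = \<bar>real_cond_exp P G (\<lambda>\<omega>. X \<omega> - step_integral B cs \<omega>) \<omega>\<bar> +
        \<bar>step_integral B (clipO r u cs) \<omega> - step_integral B csO \<omega>\<bar> + \<bar>XO \<omega> - step_integral B csO \<omega>\<bar> +
        \<bar>Theta r u cs - c\<bar> * \<bar>B u \<omega> - B r \<omega>\<bar>" for \<omega>
    have le: "AE \<omega> in P. \<bar>D \<omega>\<bar> \<le> R \<omega>"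
      using d1 d2
    proof eventually_elim
      case (elim \<omega>)
      have "D \<omega> = real_cond_exp P G (\<lambda>\<omega>. X \<omega> - step_integral B cs \<omega>) \<omega> +
          (step_integral B (clipO r u cs) \<omega> - step_integral B csO \<omega>) - (XO \<omega> - step_integral B csO \<omega>) +
          (Theta r u cs - c) * (B u \<omega> - B r \<omega>)"
        using elim by (simp add: D_def algebra_simps)
      moreover have "\<And>a b c d :: real. \<bar>a + b - c + d\<bar> \<le> \<bar>a\<bar> + \<bar>b\<bar> + \<bar>c\<bar> + \<bar>d\<bar>" by arith
      ultimately show ?case unfolding R_def abs_mult[symmetric] by metis
    qed
    have i1: "integrable P (\<lambda>\<omega>. \<bar>real_cond_exp P G (\<lambda>\<omega>. X \<omega> - step_integral B cs \<omega>) \<omega>\<bar>)"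
      using sfs.real_cond_exp_int(1)[OF L1(1)] by auto
    have i2: "integrable P (\<lambda>\<omega>. \<bar>step_integral B (clipO r u cs) \<omega> - step_integral B csO \<omega>\<bar>)" by (rule L2(2))
    have i3: "integrable P (\<lambda>\<omega>. \<bar>XO \<omega> - step_integral B csO \<omega>\<bar>)" by (rule L3(2))
    have i4: "integrable P (\<lambda>\<omega>. \<bar>Theta r u cs - c\<bar> * \<bar>B u \<omega> - B r \<omega>\<bar>)" using Si by auto
    have "expectation (\<lambda>\<omega>. \<bar>D \<omega>\<bar>) \<le> expectation R"
      by (rule integral_mono_AE[OF _ _ le]) (use Di i1 i2 i3 i4 in \<open>auto simp: R_def\<close>)
    also have "expectation R = expectation (\<lambda>\<omega>. \<bar>real_cond_exp P G (\<lambda>\<omega>. X \<omega> - step_integral B cs \<omega>) \<omega>\<bar>) +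
        expectation (\<lambda>\<omega>. \<bar>step_integral B (clipO r u cs) \<omega> - step_integral B csO \<omega>\<bar>) +
        expectation (\<lambda>\<omega>. \<bar>XO \<omega> - step_integral B csO \<omega>\<bar>) + \<bar>Theta r u cs - c\<bar> * KS"
      unfolding R_def KS_def using i1 i2 i3 i4 Si by simp
    also have "\<dots> \<le> 2 * \<eta> + 5 * \<eta> + 2 * \<eta> + \<eta> * (1 + (u - r)) / (u - r) * KS"
      using t1 t2 t3 t4 KS0 by (intro add_mono mult_right_mono) auto
    also have "\<dots> = K * \<eta>" unfolding K_def by (simp add: algebra_simps)
    finally show ?thesis .
  qed
  have E0: "expectation (\<lambda>\<omega>. \<bar>D \<omega>\<bar>) \<le> 0"
  proof (rule ccontr)
    assume "\<not> expectation (\<lambda>\<omega>. \<bar>D \<omega>\<bar>) \<le> 0"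
    then have p: "0 < expectation (\<lambda>\<omega>. \<bar>D \<omega>\<bar>)" by simp
    define \<eta> where "\<eta> = expectation (\<lambda>\<omega>. \<bar>D \<omega>\<bar>) / (2 * (K + 1))"
    have \<eta>: "0 < \<eta>" unfolding \<eta>_def using p K0 by simp
    have "expectation (\<lambda>\<omega>. \<bar>D \<omega>\<bar>) \<le> K * \<eta>" by (rule main[OF \<eta>])
    also have "\<dots> < expectation (\<lambda>\<omega>. \<bar>D \<omega>\<bar>)"
    proof -
      have q: "K / (2 * (K + 1)) < 1" using K0 by (simp add: field_simps)
      have "K * \<eta> = expectation (\<lambda>\<omega>. \<bar>D \<omega>\<bar>) * (K / (2 * (K + 1)))" unfolding \<eta>_def by simp
      also have "\<dots> < expectation (\<lambda>\<omega>. \<bar>D \<omega>\<bar>) * 1" by (rule mult_strict_left_mono[OF q p])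
      finally show ?thesis by simp
    qed
    finally show False by simp
  qed
  have "expectation (\<lambda>\<omega>. \<bar>D \<omega>\<bar>) = 0" using E0 by (simp add: order_antisym)
  then have "AE \<omega> in P. \<bar>D \<omega>\<bar> = 0"
    using integral_nonneg_eq_0_iff_AE[of P "\<lambda>\<omega>. \<bar>D \<omega>\<bar>"] Di by auto
  then show ?thesis unfolding G_def[symmetric] c_def[symmetric]
    by eventually_elim (simp add: D_def)
qed

end

lemma alg_final:
  fixes x y a b c e K S d :: real
  assumes "d \<noteq> 0"
  shows "x + (a - b) / d * S + (y + (c - e) / d * S) + (K - a - c) / d * S = x + y + S / d * (K - b - e)"
  using assms by (simp add: field_simps)

context BM
begin

lemma L1L2_meas:
  assumes "L1L2_pos f"
  shows "(\<lambda>x. indicator {0..} x * f x) \<in> borel_measurable borel"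
proof -
  have "integrable lborel (\<lambda>x. indicator {0..} x *\<^sub>R f x)"
    using assms unfolding L1L2_pos_def set_integrable_def by auto
  then show ?thesis by auto
qed

lemma main_mart:
  fixes fm fp :: "real \<Rightarrow> real" and C :: real
    and Im Ip :: "real \<Rightarrow> 'a \<Rightarrow> real"
  assumes fmL: "L1L2_pos fm" and fpL: "L1L2_pos fp"
    and Imw: "\<forall>s\<ge>0. wiener_integral P B fm {0..s} (Im s)"
    and Ipw: "\<forall>t\<ge>0. wiener_integral P B fp {t..} (Ip t)"
  shows "past_future_martingale P (pf_filtration P B)
           (\<lambda>s t \<omega>. Im s \<omega> + Ip t \<omega> + (B t \<omega> - B s \<omega>) / (t - s) *
               (C - (LINT u:{0..s}|lborel. fm u) - (LINT u:{t..}|lborel. fp u)))"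
proof -
  have fmm: "(\<lambda>x. indicator {0..} x * fm x) \<in> borel_measurable borel" by (rule L1L2_meas[OF fmL])
  have fpm: "(\<lambda>x. indicator {0..} x * fp x) \<in> borel_measurable borel" by (rule L1L2_meas[OF fpL])
  have fmi: "set_integrable lborel {0..} fm" using fmL by (simp add: L1L2_pos_def)
  have fpi: "set_integrable lborel {0..} fp" using fpL by (simp add: L1L2_pos_def)
  have Imi: "integrable P (Im s)" if "0 \<le> s" for s
    by (rule wiener_int[OF Imw[rule_format, OF that] _ _ fmm]) auto
  have Ipi: "integrable P (Ip t)" if "0 \<le> t" for t
    by (rule wiener_int[OF Ipw[rule_format, OF that] _ _ fpm]) (use that in auto)
  define Fm where "Fm s = (LINT u:{0..s}|lborel. fm u)" for s
  define Fp where "Fp t = (LINT u:{t..}|lborel. fp u)" for t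
  define M where "M s t \<omega> = Im s \<omega> + Ip t \<omega> + (B t \<omega> - B s \<omega>) / (t - s) * (C - Fm s - Fp t)" for s t \<omega>
  have Mi: "integrable P (M s t)" if "0 \<le> s" "s < t" for s t
  proof -
    have "integrable P (\<lambda>\<omega>. Im s \<omega> + Ip t \<omega> + (B t \<omega> - B s \<omega>) / (t - s) * (C - Fm s - Fp t))"
      using Imi[of s] Ipi[of t] B_int[of s] B_int[of t] that by auto
    then show ?thesis by (simp add: M_def[abs_def])
  qed
  have Mm: "M s t \<in> borel_measurable (pf_filtration P B s t)" if "0 \<le> s" "s < t" for s t
  proof -
    have [measurable]: "Im s \<in> borel_measurable (pf_filtration P B s t)"
      unfolding pf_filtration_def
      by (rule gen_sigma_meas_mono[of _ "{0..s}"]) (use Imw that in \<open>auto simp: wiener_integral_def\<close>)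
    have [measurable]: "Ip t \<in> borel_measurable (pf_filtration P B s t)"
      unfolding pf_filtration_def
      by (rule gen_sigma_meas_mono[of _ "{t..}"]) (use Ipw that in \<open>auto simp: wiener_integral_def\<close>)
    have [measurable]: "B s \<in> borel_measurable (pf_filtration P B s t)" "B t \<in> borel_measurable (pf_filtration P B s t)"
      unfolding pf_filtration_def using that by (auto intro!: B_meas_gen)
    show ?thesis unfolding M_def[abs_def] by measurable
  qed
  have Mc: "AE \<omega> in P. real_cond_exp P (pf_filtration P B r u) (M s t) \<omega> = M r u \<omega>"
    if rs: "0 \<le> r" "r < s" "s < t" "t < u" for r s t u
  proof -
    define G where "G = pf_filtration P B r u"
    interpret sfs: sigma_finite_subalgebra P G
      unfolding G_def pf_filtration_def by (rule gen_sigma_sfs)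
    have ru: "r < u" using rs by simp
    have s0: "0 \<le> s" and t0: "0 \<le> t" using rs by auto
    have cIm: "AE \<omega> in P. real_cond_exp P G (Im s) \<omega> =
        Im r \<omega> + ((LINT x:{0..s}|lborel. fm x) - (LINT x:{0..r}|lborel. fm x)) / (u - r) * (B u \<omega> - B r \<omega>)"
      unfolding G_def
    proof (rule cond_wiener[OF rs(1) ru fmi])
      show "{0..s} \<subseteq> {0..}" "{0..s} \<in> sets borel" "{0..r} \<in> sets borel" by auto
      show "{0..r} \<subseteq> {0..s}" using rs by auto
      show "{0..r} \<inter> {r<..<u} = {}" by auto
      show "{0..s} \<inter> ({..<r} \<union> {u..}) \<subseteq> {0..r}" using rs by auto
      show "wiener_integral P B fm {0..s} (Im s)" using Imw s0 by auto
      show "wiener_integral P B fm {0..r} (Im r)" using Imw rs by auto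
    qed
    have cIp: "AE \<omega> in P. real_cond_exp P G (Ip t) \<omega> =
        Ip u \<omega> + ((LINT x:{t..}|lborel. fp x) - (LINT x:{u..}|lborel. fp x)) / (u - r) * (B u \<omega> - B r \<omega>)"
      unfolding G_def
    proof (rule cond_wiener[OF rs(1) ru fpi])
      show "{t..} \<subseteq> {0..}" using t0 by auto
      show "{t..} \<in> sets borel" "{u..} \<in> sets borel" by auto
      show "{u..} \<subseteq> {t..}" using rs by auto
      show "{u..} \<inter> {r<..<u} = {}" by auto
      show "{t..} \<inter> ({..<r} \<union> {u..}) \<subseteq> {u..}" using rs by auto
      show "wiener_integral P B fp {t..} (Ip t)" using Ipw t0 by auto
      show "wiener_integral P B fp {u..} (Ip u)" using Ipw rs by auto
    qed
    have kt: "AE \<omega> in P. real_cond_exp P G (\<lambda>\<omega>. B t \<omega> - B r \<omega>) \<omega> = (t - r) / (u - r) * (B u \<omega> - B r \<omega>)"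
      unfolding G_def by (rule key) (use rs in auto)
    have ks: "AE \<omega> in P. real_cond_exp P G (\<lambda>\<omega>. B s \<omega> - B r \<omega>) \<omega> = (s - r) / (u - r) * (B u \<omega> - B r \<omega>)"
      unfolding G_def by (rule key) (use rs in auto)
    have itr: "integrable P (\<lambda>\<omega>. B t \<omega> - B r \<omega>)" using B_int[of t] B_int[of r] rs by auto
    have isr: "integrable P (\<lambda>\<omega>. B s \<omega> - B r \<omega>)" using B_int[of s] B_int[of r] rs by auto
    define K where "K = (C - Fm s - Fp t) / (t - s)"
    have eM: "M s t = (\<lambda>\<omega>. (Im s \<omega> + Ip t \<omega>) + K * ((B t \<omega> - B r \<omega>) - (B s \<omega> - B r \<omega>)))"
      by (auto simp: M_def K_def fun_eq_iff)
    have iII: "integrable P (\<lambda>\<omega>. Im s \<omega> + Ip t \<omega>)" using Imi[OF s0] Ipi[OF t0] by auto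
    have iD: "integrable P (\<lambda>\<omega>. (B t \<omega> - B r \<omega>) - (B s \<omega> - B r \<omega>))" by (rule Bochner_Integration.integrable_diff[OF itr isr])
    have iKD: "integrable P (\<lambda>\<omega>. K * ((B t \<omega> - B r \<omega>) - (B s \<omega> - B r \<omega>)))" using iD by auto
    have a1: "AE \<omega> in P. real_cond_exp P G (M s t) \<omega> =
        real_cond_exp P G (\<lambda>\<omega>. Im s \<omega> + Ip t \<omega>) \<omega> + real_cond_exp P G (\<lambda>\<omega>. K * ((B t \<omega> - B r \<omega>) - (B s \<omega> - B r \<omega>))) \<omega>"
      unfolding eM by (rule sfs.real_cond_exp_add[OF iII iKD])
    have a2: "AE \<omega> in P. real_cond_exp P G (\<lambda>\<omega>. Im s \<omega> + Ip t \<omega>) \<omega> = real_cond_exp P G (Im s) \<omega> + real_cond_exp P G (Ip t) \<omega>"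
      by (rule sfs.real_cond_exp_add[OF Imi[OF s0] Ipi[OF t0]])
    have a3: "AE \<omega> in P. real_cond_exp P G (\<lambda>\<omega>. K * ((B t \<omega> - B r \<omega>) - (B s \<omega> - B r \<omega>))) \<omega> =
        K * real_cond_exp P G (\<lambda>\<omega>. (B t \<omega> - B r \<omega>) - (B s \<omega> - B r \<omega>)) \<omega>"
      by (rule sfs.real_cond_exp_cmult[OF iD])
    have a4: "AE \<omega> in P. real_cond_exp P G (\<lambda>\<omega>. (B t \<omega> - B r \<omega>) - (B s \<omega> - B r \<omega>)) \<omega> =
        real_cond_exp P G (\<lambda>\<omega>. B t \<omega> - B r \<omega>) \<omega> - real_cond_exp P G (\<lambda>\<omega>. B s \<omega> - B r \<omega>) \<omega>"
      by (rule sfs.real_cond_exp_diff[OF itr isr])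
    have Fm_eq: "(LINT x:{0..s}|lborel. fm x) = Fm s" "(LINT x:{0..r}|lborel. fm x) = Fm r" by (simp_all add: Fm_def)
    have Fp_eq: "(LINT x:{t..}|lborel. fp x) = Fp t" "(LINT x:{u..}|lborel. fp x) = Fp u" by (simp_all add: Fp_def)
    have alg: "Im r \<omega> + (Fm s - Fm r) / (u - r) * (B u \<omega> - B r \<omega>) + (Ip u \<omega> + (Fp t - Fp u) / (u - r) * (B u \<omega> - B r \<omega>)) +
        K * ((t - r) / (u - r) * (B u \<omega> - B r \<omega>) - (s - r) / (u - r) * (B u \<omega> - B r \<omega>)) = M r u \<omega>" for \<omega>
    proof -
      have ts: "t - s \<noteq> 0" and ur: "u - r \<noteq> 0" using rs by auto
      have 1: "(t - r) / (u - r) * (B u \<omega> - B r \<omega>) - (s - r) / (u - r) * (B u \<omega> - B r \<omega>) =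
               (t - s) / (u - r) * (B u \<omega> - B r \<omega>)"
      proof -
        have "(t - r) / (u - r) * (B u \<omega> - B r \<omega>) - (s - r) / (u - r) * (B u \<omega> - B r \<omega>) =
               ((t - r) - (s - r)) / (u - r) * (B u \<omega> - B r \<omega>)"
          by (metis diff_divide_distrib left_diff_distrib)
        then show ?thesis by simp
      qed
      have 2: "K * (t - s) = C - Fm s - Fp t" using ts by (simp add: K_def)
      have 3: "K * ((t - s) / (u - r) * (B u \<omega> - B r \<omega>)) = (K * (t - s)) / (u - r) * (B u \<omega> - B r \<omega>)"
        by simp
      have "K * ((t - r) / (u - r) * (B u \<omega> - B r \<omega>) - (s - r) / (u - r) * (B u \<omega> - B r \<omega>)) =
            (C - Fm s - Fp t) / (u - r) * (B u \<omega> - B r \<omega>)"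
        unfolding 1 3 2 ..
      then show ?thesis unfolding M_def using alg_final[OF ur] by simp
    qed
    show ?thesis unfolding G_def[symmetric]
      using a1 a2 a3 a4 cIm cIp kt ks
      by eventually_elim (simp only: Fm_eq Fp_eq alg)
  qed
  show ?thesis
    unfolding past_future_martingale_def M_def[symmetric, unfolded Fm_def Fp_def]
    using Mi Mm Mc by (auto simp: M_def Fm_def Fp_def)
qed

end

theorem mainTheorem6:
  fixes P :: "'a measure" and B :: "real \<Rightarrow> 'a \<Rightarrow> real"
    and fm fp :: "real \<Rightarrow> real" and C :: real
    and Im Ip :: "real \<Rightarrow> 'a \<Rightarrow> real"
  assumes "standard_BM P B"
    and "L1L2_pos fm" and "L1L2_pos fp"
    and "\<forall>s\<ge>0. wiener_integral P B fm {0..s} (Im s)"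
    and "\<forall>t\<ge>0. wiener_integral P B fp {t..} (Ip t)"
  shows "past_future_martingale P (pf_filtration P B)
           (\<lambda>s t \<omega>. Im s \<omega> + Ip t \<omega> + (B t \<omega> - B s \<omega>) / (t - s) *
               (C - (LINT u:{0..s}|lborel. fm u) - (LINT u:{t..}|lborel. fp u)))"
proof -
  interpret BM P B by (rule BM.intro) (rule assms(1))
  show ?thesis by (rule main_mart[OF assms(2-5)])
qed

end
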